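(* Let $S,T$ be two causal teams over a signature $\sigma$, or two generalized causal teams over $\sigma$, with $T$ nonempty. Then $S\models\Xi^T$ if and only if $T\not\preccurlyeq S$ (with $\models^c$, respectively $\models^g$).
   Context: A signature $\sigma=(\mathrm{Dom},\mathrm{Ran})$: $\mathrm{Dom}$ nonempty finite set of variables, each with nonempty finite range $\mathrm{Ran}(X)$; $\mathbf X=\mathbf x$ abbreviates $X_1=x_1\wedge\dots\wedge X_n=x_n$ ($\mathbf x\in\prod\mathrm{Ran}(X_i)$), inconsistent if it contains $X=x,X=x'$ with $x\ne x'$. ${=}(V)$ is the constancy atom; $\bot$ abbreviates $X=x\wedge\neg(X=x)$; $\alpha\supset\beta$ abbreviates $\neg\alpha\vee\beta$; empty $\vee$-disjunction is $\bot$. Systems of functions $\mathcal F$: for each $V\in\mathrm{En}(\mathcal F)\subseteq\mathrm{Dom}$ parents $PA^{\mathcal F}_V\subseteq\mathrm{Dom}\setminus\{V\}$ and $\mathcal F_V:\mathrm{Ran}(PA^{\mathcal F}_V)\to\mathrm{Ran}(V)$; $\mathrm{Ex}(\mathcal F)=\mathrm{Dom}\setminus\mathrm{En}(\mathcal F)$; only recursive (acyclic parent graph), forming $\mathbb F_\sigma$. Assignments ($s(X)\in\mathrm{Ran}(X)$) form $\mathbb A_\sigma$; $s$ compatible with $\mathcal F$ if $s(V)=\mathcal F_V(s(PA^{\mathcal F}_V))$ for $V\in\mathrm{En}(\mathcal F)$. For consistent $\mathbf X=\mathbf x$: $\mathcal F_{\mathbf X=\mathbf x}$ restricts $\mathcal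 F$ to $\mathrm{En}(\mathcal F)\setminus\mathbf X$; $s^{\mathcal F}_{\mathbf X=\mathbf x}$: $X_i\mapsto x_i$, $V\mapsto s(V)$ on $\mathrm{Ex}(\mathcal F)\setminus\mathbf X$, $V\mapsto\mathcal F_V(s^{\mathcal F}_{\mathbf X=\mathbf x}(PA^{\mathcal F}_V))$ on $\mathrm{En}(\mathcal F)\setminus\mathbf X$. Causal team $T=(T^-,\mathcal F)$ ($T^-$ compatible assignments; empty team components identified as $\emptyset$); causal subteams $(S^-,\mathcal F)$, $S^-\subseteq T^-$; $T_{\mathbf X=\mathbf x}=(\{s^{\mathcal F}_{\mathbf X=\mathbf x}:s\in T^-\},\mathcal F_{\mathbf X=\mathbf x})$; $\models^c$: $T\models X=x$ iff $s(X)=x$ for all $s\in T^-$; $T\models{=}(V)$ iff $s(V)=s'(V)$ for all $s,s'\in T^-$; $T\models\neg\alpha$ iff $(\{s\},\mathcal F)\not\models\alpha$ for all $s\in T^-$; $\wedge$ classical; $T\models\varphi\vee\psi$ iff causal subteams $T_1,T_2$ exist with $T_1^-\cup T_2^-=T^-$, $T_1\models\varphi$, $T_2\models\psi$; $T\models\mathbf X=\mathbf x\;\Box\!\!\rightarrow\varphi$ iff $\mathbf X=\mathbf x$ inconsistent or $T_{\mathbf X=\mathbf x}\models\varphi$. Generalized causal team: a set $T$ of compatible pairs $(s,\mathcal F)$, $\mathcal F\in\mathbb F_\sigma$; subteams are subsets; $T^-=\{s:(s,\mathcal F)\in T\}$; $T_{\mathbf X=\mathbf x}=\{(s^{\mathcal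 F}_{\mathbf X=\mathbf x},\mathcal F_{\mathbf X=\mathbf x}):(s,\mathcal F)\in T\}$; $\models^g$: same clauses except $T\models\neg\alpha$ iff $\{(s,\mathcal F)\}\not\models\alpha$ for all $(s,\mathcal F)\in T$, and $T\models\varphi\vee\psi$ iff $T=T_1\cup T_2$ with $T_1\models\varphi$, $T_2\models\psi$. $\mathrm{Cn}(\mathcal F)=\{V\in\mathrm{En}(\mathcal F):\mathcal F_V\text{ constant}\}$; $\mathcal F_V\sim\mathcal G_V$ iff $\mathcal F_V(\mathbf x\mathbf y)=\mathcal G_V(\mathbf x\mathbf z)$ for all $\mathbf x\in\mathrm{Ran}(PA^{\mathcal F}_V\cap PA^{\mathcal G}_V)$, $\mathbf y\in\mathrm{Ran}(PA^{\mathcal F}_V\setminus PA^{\mathcal G}_V)$, $\mathbf z\in\mathrm{Ran}(PA^{\mathcal G}_V\setminus PA^{\mathcal F}_V)$; $\mathcal F\sim\mathcal G$ iff $\mathrm{En}(\mathcal F)\setminus\mathrm{Cn}(\mathcal F)=\mathrm{En}(\mathcal G)\setminus\mathrm{Cn}(\mathcal G)$ and $\mathcal F_V\sim\mathcal G_V$ for each such $V$. Nonempty causal teams: $(T^-,\mathcal F)\approx(S^-,\mathcal G)$ iff $T^-=S^-$, $\mathcal F\sim\mathcal G$. Generalized: $T^{\mathcal F}=\{(s,\mathcal G)\in T:\mathcal G\sim\mathcal F\}$, $S\approx T$ iff $(S^{\mathcal F})^-=(T^{\mathcal F})^-$ for all $\mathcal F$; on pairs $(s,\mathcal F)\approx(t,\mathcal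 G)$ iff $s=t$ and $\mathcal F\sim\mathcal G$, and $T/_{\approx}$ is the set of $\approx$-classes of elements of $T$. $S\preccurlyeq T$ iff $S\approx R$ for some causal subteam $R$ of $T$ ($\emptyset\preccurlyeq T$ always). For a causal team $T=(T^-,\mathcal F)$, $T^g=\{(s,\mathcal F):s\in T^-\}$. Formulas: $\Theta^{A}:=\bigvee_{s\in A}\bigwedge_{V\in\mathrm{Dom}}V=s(V)$ for $A\subseteq\mathbb A_\sigma$. With $\mathbf W_V$ listing $\mathrm{Dom}\setminus\{V\}$: $\Phi^{\mathcal F}:=\bigwedge_{V\in\mathrm{En}(\mathcal F)\setminus\mathrm{Cn}(\mathcal F)}\eta(V)\wedge\bigwedge_{V\notin\mathrm{En}(\mathcal F)\setminus\mathrm{Cn}(\mathcal F)}\xi(V)$, $\eta(V)$ the conjunction of all $(\mathbf W=\mathbf w\wedge PA^{\mathcal F}_V=\mathbf p)\;\Box\!\!\rightarrow V=\mathcal F_V(\mathbf p)$ ($\mathbf W$ listing $\mathrm{Dom}\setminus(PA^{\mathcal F}_V\cup\{V\})$, $\mathbf w\in\mathrm{Ran}(\mathbf W)$, $\mathbf p\in\mathrm{Ran}(PA^{\mathcal F}_V)$), $\xi(V)$ the conjunction of all $V=v\supset(\mathbf W_V=\mathbf w\;\Box\!\!\rightarrow V=v)$. $\chi:=\bigwedge_{V}\bigwedge_{\mathbf w\in\mathrm{Ran}(\mathbf W_V)}(\mathbf W_V=\mathbf w\;\Box\!\!\rightarrow{=}(V))\wedge\bigwedge_V{=}(V)$; $\chi_0:=\bot$,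 $\chi_k:=\chi\vee\dots\vee\chi$ ($k$ disjuncts). For a nonempty generalized causal team $T$ with $|T/_{\approx}|=k+1$: $\Xi^T:=\chi_k\vee\Theta^{\mathbb A_\sigma\setminus T^-}\vee\bigvee\{\Theta^{\{s\}}\wedge\Phi^{\mathcal F}: s\in T^-,\ \mathcal F\in\mathbb F_\sigma,\ \{(s,\mathcal F)\}\not\preccurlyeq T\}$. For a nonempty causal team $T$, $\Xi^T:=\Xi^{T^g}$. *)

theory Defs
  imports Main "HOL-Library.FuncSet"
begin

text \<open>Elements of Ran(Xs) (for a set Xs of variables) are represented as extensional
  functions in PiE Xs Ran; assignments are the elements of PiE Dom Ran.\<close>

definition signature :: "'v set \<Rightarrow> ('v \<Rightarrow> 'a set) \<Rightarrow> bool" where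
  "signature Dom Ran \<longleftrightarrow> finite Dom \<and> Dom \<noteq> {} \<and>
     (\<forall>X\<in>Dom. finite (Ran X) \<and> Ran X \<noteq> {})"

definition assignments :: "'v set \<Rightarrow> ('v \<Rightarrow> 'a set) \<Rightarrow> ('v \<Rightarrow> 'a) set" where
  "assignments Dom Ran = PiE Dom Ran"

record ('v, 'a) sys =
  en :: "'v set"
  pa :: "'v \<Rightarrow> 'v set"
  fn :: "'v \<Rightarrow> ('v \<Rightarrow> 'a) \<Rightarrow> 'a"

definition wf_sys :: "'v set \<Rightarrow> ('v \<Rightarrow> 'a set) \<Rightarrow> ('v, 'a) sys \<Rightarrow> bool" where
  "wf_sys Dom Ran F \<longleftrightarrow>
     en F \<subseteq> Dom \<and>
     (\<forall>V\<in>en F. pa F V \<subseteq> Dom - {V} \<and> fn F V \<in> PiE (PiE (pa F V) Ran) (\<lambda>_. Ran V)) \<and>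
     (\<forall>V. V \<notin> en F \<longrightarrow> pa F V = {} \<and> fn F V = (\<lambda>_. undefined)) \<and>
     acyclic {(X, V). V \<in> en F \<and> X \<in> pa F V}"

definition compatible :: "'v set \<Rightarrow> ('v \<Rightarrow> 'a set) \<Rightarrow> ('v \<Rightarrow> 'a) \<Rightarrow> ('v, 'a) sys \<Rightarrow> bool" where
  "compatible Dom Ran s F \<longleftrightarrow> s \<in> assignments Dom Ran \<and>
     (\<forall>V\<in>en F. s V = fn F V (restrict s (pa F V)))"

definition causal_team :: "'v set \<Rightarrow> ('v \<Rightarrow> 'a set) \<Rightarrow> ('v \<Rightarrow> 'a) set \<Rightarrow> ('v, 'a) sys \<Rightarrow> bool" where
  "causal_team Dom Ran T F \<longleftrightarrow> wf_sys Dom Ran F \<and> (\<forall>s\<in>T. compatible Dom Ran s F)"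

definition gen_team :: "'v set \<Rightarrow> ('v \<Rightarrow> 'a set) \<Rightarrow> (('v \<Rightarrow> 'a) \<times> ('v, 'a) sys) set \<Rightarrow> bool" where
  "gen_team Dom Ran T \<longleftrightarrow> (\<forall>(s, F)\<in>T. wf_sys Dom Ran F \<and> compatible Dom Ran s F)"

text \<open>An antecedent X1=x1 /\ ... /\ Xn=xn is a list of pairs.\<close>
definition consistent :: "('v \<times> 'a) list \<Rightarrow> bool" where
  "consistent xs \<longleftrightarrow> (\<forall>(X, x)\<in>set xs. \<forall>(Y, y)\<in>set xs. X = Y \<longrightarrow> x = y)"

definition do_sys :: "('v, 'a) sys \<Rightarrow> ('v \<times> 'a) list \<Rightarrow> ('v, 'a) sys" where
  "do_sys F xs =
     (let E = en F - fst ` set xs in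
      \<lparr> en = E,
        pa = (\<lambda>V. if V \<in> E then pa F V else {}),
        fn = (\<lambda>V. if V \<in> E then fn F V else (\<lambda>_. undefined)) \<rparr>)"

text \<open>The intervened assignment s^F_{X=x}, the unique assignment satisfying the
  recursive clauses (unique since F is recursive).\<close>
definition do_asg :: "('v, 'a) sys \<Rightarrow> ('v \<times> 'a) list \<Rightarrow> ('v \<Rightarrow> 'a) \<Rightarrow> ('v \<Rightarrow> 'a)" where
  "do_asg F xs s = (THE t.
     (\<forall>(X, x)\<in>set xs. t X = x) \<and>
     (\<forall>V. V \<notin> en F \<and> V \<notin> fst ` set xs \<longrightarrow> t V = s V) \<and>
     (\<forall>V\<in>en F - fst ` set xs. t V = fn F V (restrict t (pa F V))))"

datatype ('v, 'a) fml =
    Eq 'v 'a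
  | Dep 'v
  | Neg "('v, 'a) fml"
  | And "('v, 'a) fml" "('v, 'a) fml"
  | Or "('v, 'a) fml" "('v, 'a) fml"
  | Cf "('v \<times> 'a) list" "('v, 'a) fml"

fun sat_c :: "('v \<Rightarrow> 'a) set \<Rightarrow> ('v, 'a) sys \<Rightarrow> ('v, 'a) fml \<Rightarrow> bool" where
  "sat_c T F (Eq X x) \<longleftrightarrow> (\<forall>s\<in>T. s X = x)"
| "sat_c T F (Dep V) \<longleftrightarrow> (\<forall>s\<in>T. \<forall>s'\<in>T. s V = s' V)"
| "sat_c T F (Neg \<alpha>) \<longleftrightarrow> (\<forall>s\<in>T. \<not> sat_c {s} F \<alpha>)"
| "sat_c T F (And \<phi> \<psi>) \<longleftrightarrow> sat_c T F \<phi> \<and> sat_c T F \<psi>"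
| "sat_c T F (Or \<phi> \<psi>) \<longleftrightarrow>
     (\<exists>T1 T2. T1 \<subseteq> T \<and> T2 \<subseteq> T \<and> T1 \<union> T2 = T \<and> sat_c T1 F \<phi> \<and> sat_c T2 F \<psi>)"
| "sat_c T F (Cf xs \<phi>) \<longleftrightarrow>
     (\<not> consistent xs \<or> sat_c (do_asg F xs ` T) (do_sys F xs) \<phi>)"

fun sat_g :: "(('v \<Rightarrow> 'a) \<times> ('v, 'a) sys) set \<Rightarrow> ('v, 'a) fml \<Rightarrow> bool" where
  "sat_g T (Eq X x) \<longleftrightarrow> (\<forall>(s, F)\<in>T. s X = x)"
| "sat_g T (Dep V) \<longleftrightarrow> (\<forall>(s, F)\<in>T. \<forall>(s', F')\<in>T. s V = s' V)"
| "sat_g T (Neg \<alpha>) \<longleftrightarrow> (\<forall>p\<in>T. \<not> sat_g {p} \<alpha>)"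
| "sat_g T (And \<phi> \<psi>) \<longleftrightarrow> sat_g T \<phi> \<and> sat_g T \<psi>"
| "sat_g T (Or \<phi> \<psi>) \<longleftrightarrow> (\<exists>T1 T2. T = T1 \<union> T2 \<and> sat_g T1 \<phi> \<and> sat_g T2 \<psi>)"
| "sat_g T (Cf xs \<phi>) \<longleftrightarrow>
     (\<not> consistent xs \<or> sat_g ((\<lambda>(s, F). (do_asg F xs s, do_sys F xs)) ` T) \<phi>)"

definition Cn :: "('v \<Rightarrow> 'a set) \<Rightarrow> ('v, 'a) sys \<Rightarrow> 'v set" where
  "Cn Ran F = {V\<in>en F. \<forall>p\<in>PiE (pa F V) Ran. \<forall>q\<in>PiE (pa F V) Ran. fn F V p = fn F V q}"

definition sim_fn :: "('v \<Rightarrow> 'a set) \<Rightarrow> ('v, 'a) sys \<Rightarrow> ('v, 'a) sys \<Rightarrow> 'v \<Rightarrow> bool" where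
  "sim_fn Ran F G V \<longleftrightarrow>
     (\<forall>p\<in>PiE (pa F V) Ran. \<forall>q\<in>PiE (pa G V) Ran.
        (\<forall>X\<in>pa F V \<inter> pa G V. p X = q X) \<longrightarrow> fn F V p = fn G V q)"

definition sim :: "('v \<Rightarrow> 'a set) \<Rightarrow> ('v, 'a) sys \<Rightarrow> ('v, 'a) sys \<Rightarrow> bool" where
  "sim Ran F G \<longleftrightarrow> en F - Cn Ran F = en G - Cn Ran G \<and>
     (\<forall>V\<in>en F - Cn Ran F. sim_fn Ran F G V)"

definition approx_c :: "('v \<Rightarrow> 'a set) \<Rightarrow> ('v \<Rightarrow> 'a) set \<Rightarrow> ('v, 'a) sys \<Rightarrow> ('v \<Rightarrow> 'a) set \<Rightarrow> ('v, 'a) sys \<Rightarrow> bool" where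
  "approx_c Ran T F S G \<longleftrightarrow> T = S \<and> (T = {} \<or> sim Ran F G)"

definition prec_c :: "('v \<Rightarrow> 'a set) \<Rightarrow> ('v \<Rightarrow> 'a) set \<Rightarrow> ('v, 'a) sys \<Rightarrow> ('v \<Rightarrow> 'a) set \<Rightarrow> ('v, 'a) sys \<Rightarrow> bool" where
  "prec_c Ran S F T G \<longleftrightarrow> (\<exists>R\<subseteq>T. approx_c Ran S F R G)"

definition gen_restr :: "('v \<Rightarrow> 'a set) \<Rightarrow> (('v \<Rightarrow> 'a) \<times> ('v, 'a) sys) set \<Rightarrow> ('v, 'a) sys
     \<Rightarrow> (('v \<Rightarrow> 'a) \<times> ('v, 'a) sys) set" where
  "gen_restr Ran T F = {(s, G)\<in>T. sim Ran G F}"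

definition approx_g :: "'v set \<Rightarrow> ('v \<Rightarrow> 'a set) \<Rightarrow> (('v \<Rightarrow> 'a) \<times> ('v, 'a) sys) set
     \<Rightarrow> (('v \<Rightarrow> 'a) \<times> ('v, 'a) sys) set \<Rightarrow> bool" where
  "approx_g Dom Ran S T \<longleftrightarrow>
     (\<forall>F. wf_sys Dom Ran F \<longrightarrow> fst ` gen_restr Ran S F = fst ` gen_restr Ran T F)"

definition prec_g :: "'v set \<Rightarrow> ('v \<Rightarrow> 'a set) \<Rightarrow> (('v \<Rightarrow> 'a) \<times> ('v, 'a) sys) set
     \<Rightarrow> (('v \<Rightarrow> 'a) \<times> ('v, 'a) sys) set \<Rightarrow> bool" where
  "prec_g Dom Ran S T \<longleftrightarrow> (\<exists>R\<subseteq>T. approx_g Dom Ran S R)"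

definition num_classes :: "('v \<Rightarrow> 'a set) \<Rightarrow> (('v \<Rightarrow> 'a) \<times> ('v, 'a) sys) set \<Rightarrow> nat" where
  "num_classes Ran T =
     card ((\<lambda>(s, F). {(t, G)\<in>T. t = s \<and> sim Ran F G}) ` T)"

text \<open>Big connectives over finite sets of formulas, via an arbitrary enumeration
  (the semantics of \<and> and \<or> is associative and commutative).\<close>
definition lst :: "'b set \<Rightarrow> 'b list" where
  "lst A = (SOME xs. set xs = A \<and> distinct xs)"

fun ors :: "('v, 'a) fml \<Rightarrow> ('v, 'a) fml list \<Rightarrow> ('v, 'a) fml" where
  "ors b [] = b"
| "ors b [\<phi>] = \<phi>"
| "ors b (\<phi> # \<psi> # \<psi>s) = Or \<phi> (ors b (\<psi> # \<psi>s))"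

fun ands :: "('v, 'a) fml \<Rightarrow> ('v, 'a) fml list \<Rightarrow> ('v, 'a) fml" where
  "ands b [] = b"
| "ands b [\<phi>] = \<phi>"
| "ands b (\<phi> # \<psi> # \<psi>s) = And \<phi> (ands b (\<psi> # \<psi>s))"

definition Bot :: "'v set \<Rightarrow> ('v \<Rightarrow> 'a set) \<Rightarrow> ('v, 'a) fml" where
  "Bot Dom Ran = (let X = (SOME X. X \<in> Dom); x = (SOME x. x \<in> Ran X) in And (Eq X x) (Neg (Eq X x)))"

definition BigOr :: "'v set \<Rightarrow> ('v \<Rightarrow> 'a set) \<Rightarrow> ('v, 'a) fml set \<Rightarrow> ('v, 'a) fml" where
  "BigOr Dom Ran A = ors (Bot Dom Ran) (lst A)"

definition BigAnd :: "'v set \<Rightarrow> ('v \<Rightarrow> 'a set) \<Rightarrow> ('v, 'a) fml set \<Rightarrow> ('v, 'a) fml" where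
  "BigAnd Dom Ran A = ands (Neg (Bot Dom Ran)) (lst A)"

definition ante :: "'v set \<Rightarrow> ('v \<Rightarrow> 'a) \<Rightarrow> ('v \<times> 'a) list" where
  "ante W w = map (\<lambda>X. (X, w X)) (lst W)"

definition Theta :: "'v set \<Rightarrow> ('v \<Rightarrow> 'a set) \<Rightarrow> ('v \<Rightarrow> 'a) set \<Rightarrow> ('v, 'a) fml" where
  "Theta Dom Ran A = BigOr Dom Ran ((\<lambda>s. BigAnd Dom Ran ((\<lambda>V. Eq V (s V)) ` Dom)) ` A)"

text \<open>eta(V): conjunction of all (W = w /\ PA_V = p) []-> V = F_V(p); the pair (w,p)
  is represented by a single element q of Ran(Dom - {V}).\<close>
definition eta :: "'v set \<Rightarrow> ('v \<Rightarrow> 'a set) \<Rightarrow> ('v, 'a) sys \<Rightarrow> 'v \<Rightarrow> ('v, 'a) fml" where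
  "eta Dom Ran F V = BigAnd Dom Ran
     ((\<lambda>q. Cf (ante (Dom - {V}) q) (Eq V (fn F V (restrict q (pa F V))))) ` PiE (Dom - {V}) Ran)"

definition xi :: "'v set \<Rightarrow> ('v \<Rightarrow> 'a set) \<Rightarrow> 'v \<Rightarrow> ('v, 'a) fml" where
  "xi Dom Ran V = BigAnd Dom Ran
     {Or (Neg (Eq V v)) (Cf (ante (Dom - {V}) w) (Eq V v)) | v w. v \<in> Ran V \<and> w \<in> PiE (Dom - {V}) Ran}"

definition Phi :: "'v set \<Rightarrow> ('v \<Rightarrow> 'a set) \<Rightarrow> ('v, 'a) sys \<Rightarrow> ('v, 'a) fml" where
  "Phi Dom Ran F = BigAnd Dom Ran
     (eta Dom Ran F ` (en F - Cn Ran F) \<union> xi Dom Ran ` (Dom - (en F - Cn Ran F)))"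

definition chi :: "'v set \<Rightarrow> ('v \<Rightarrow> 'a set) \<Rightarrow> ('v, 'a) fml" where
  "chi Dom Ran = And
     (BigAnd Dom Ran {Cf (ante (Dom - {V}) w) (Dep V) | V w. V \<in> Dom \<and> w \<in> PiE (Dom - {V}) Ran})
     (BigAnd Dom Ran (Dep ` Dom))"

definition chik :: "'v set \<Rightarrow> ('v \<Rightarrow> 'a set) \<Rightarrow> nat \<Rightarrow> ('v, 'a) fml" where
  "chik Dom Ran k = ors (Bot Dom Ran) (replicate k (chi Dom Ran))"

definition Xi_g :: "'v set \<Rightarrow> ('v \<Rightarrow> 'a set) \<Rightarrow> (('v \<Rightarrow> 'a) \<times> ('v, 'a) sys) set \<Rightarrow> ('v, 'a) fml" where
  "Xi_g Dom Ran T =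
     Or (chik Dom Ran (num_classes Ran T - 1))
       (Or (Theta Dom Ran (assignments Dom Ran - fst ` T))
           (BigOr Dom Ran {And (Theta Dom Ran {s}) (Phi Dom Ran F) | s F.
               s \<in> fst ` T \<and> wf_sys Dom Ran F \<and> \<not> prec_g Dom Ran {(s, F)} T}))"

definition to_gen :: "('v \<Rightarrow> 'a) set \<Rightarrow> ('v, 'a) sys \<Rightarrow> (('v \<Rightarrow> 'a) \<times> ('v, 'a) sys) set" where
  "to_gen T F = {(s, F) | s. s \<in> T}"

definition Xi_c :: "'v set \<Rightarrow> ('v \<Rightarrow> 'a set) \<Rightarrow> ('v \<Rightarrow> 'a) set \<Rightarrow> ('v, 'a) sys \<Rightarrow> ('v, 'a) fml" where
  "Xi_c Dom Ran T F = Xi_g Dom Ran (to_gen T F)"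

end

theory Submission
  imports Defs
begin

lemma sat_g_empty: "sat_g {} \<phi>"
  by (induction \<phi>) auto

lemma sat_g_mono: "sat_g T \<phi> \<Longrightarrow> S \<subseteq> T \<Longrightarrow> sat_g S \<phi>"
proof (induction \<phi> arbitrary: S T)
  case (Or \<phi>1 \<phi>2)
  then obtain T1 T2 where "T = T1 \<union> T2" "sat_g T1 \<phi>1" "sat_g T2 \<phi>2" by auto
  then have "S = (T1 \<inter> S) \<union> (T2 \<inter> S)" "sat_g (T1 \<inter> S) \<phi>1" "sat_g (T2 \<inter> S) \<phi>2"
    using Or by auto
  then show ?case by auto
next
  case (Cf xs \<phi>)
  show ?case
  proof (cases "consistent xs")
    case True
    let ?f = "\<lambda>(s, F). (do_asg F xs s, do_sys F xs)"
    have "sat_g (?f ` T) \<phi>" using Cf.prems(1) True by simp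
    moreover have "?f ` S \<subseteq> ?f ` T" using Cf.prems(2) by (rule image_mono)
    ultimately have "sat_g (?f ` S) \<phi>" by (rule Cf.IH)
    then show ?thesis by simp
  qed simp
next
  case (Dep V)
  then show ?case by (simp add: subset_eq) blast
qed auto

lemma sat_Bot: "sat_g S (Bot Dom Ran) \<longleftrightarrow> S = {}"
  by (auto simp: Bot_def Let_def)

lemma sat_NegBot: "sat_g S (Neg (Bot Dom Ran))"
  by (auto simp: sat_Bot)

lemma lst: "finite A \<Longrightarrow> set (lst A) = A \<and> distinct (lst A)"
  unfolding lst_def by (rule someI_ex) (rule finite_distinct_list)

lemma sat_ands: "sat_g S (ands b xs) \<longleftrightarrow> (if xs = [] then sat_g S b else (\<forall>\<phi>\<in>set xs. sat_g S \<phi>))"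
  by (induction b xs rule: ands.induct) auto

lemma sat_BigAnd: "finite A \<Longrightarrow> sat_g S (BigAnd Dom Ran A) \<longleftrightarrow> (\<forall>\<phi>\<in>A. sat_g S \<phi>)"
proof (cases "A = {}")
  case True
  then show ?thesis using lst[of A] sat_NegBot[of S Dom Ran] unfolding BigAnd_def by (simp only: sat_ands) simp
next
  case False
  assume "finite A"
  then show ?thesis using lst[of A] False unfolding BigAnd_def by (simp only: sat_ands) auto
qed

lemma sat_ors: "xs \<noteq> [] \<Longrightarrow> sat_g S (ors b xs) \<longleftrightarrow>
   (\<exists>g. (\<forall>p\<in>S. g p < length xs) \<and> (\<forall>i<length xs. sat_g {p\<in>S. g p = i} (xs!i)))"
proof (induction b xs arbitrary: S rule: ors.induct)
  case (1 b)
  then show ?case by simp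
next
  case (2 b \<phi>)
  show ?case
  proof
    assume "sat_g S (ors b [\<phi>])"
    then show "\<exists>g. (\<forall>p\<in>S. g p < length [\<phi>]) \<and> (\<forall>i<length [\<phi>]. sat_g {p\<in>S. g p = i} ([\<phi>]!i))"
      by (intro exI[of _ "\<lambda>_. 0"]) auto
  next
    assume "\<exists>g. (\<forall>p\<in>S. g p < length [\<phi>]) \<and> (\<forall>i<length [\<phi>]. sat_g {p\<in>S. g p = i} ([\<phi>]!i))"
    then obtain g where "\<forall>p\<in>S. g p < 1" "\<forall>i<1. sat_g {p\<in>S. g p = i} ([\<phi>]!i)" by auto
    then have "\<forall>p\<in>S. g p < 1" "sat_g {p\<in>S. g p = 0} \<phi>" by auto
    moreover have "{p\<in>S. g p = 0} = S" using calculation by auto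
    ultimately show "sat_g S (ors b [\<phi>])" by simp
  qed
next
  case (3 b \<phi> \<psi> \<psi>s)
  let ?xs = "\<psi> # \<psi>s"
  show ?case
  proof
    assume "sat_g S (ors b (\<phi> # \<psi> # \<psi>s))"
    then obtain T1 T2 where T: "S = T1 \<union> T2" "sat_g T1 \<phi>" "sat_g T2 (ors b ?xs)" by auto
    from 3(1)[of T2] T(3) obtain g where g: "\<forall>p\<in>T2. g p < length ?xs"
      "\<forall>i<length ?xs. sat_g {p\<in>T2. g p = i} (?xs!i)" by auto
    define h where "h p = (if p \<in> T2 then Suc (g p) else 0)" for p
    have "\<forall>p\<in>S. h p < length (\<phi> # ?xs)" using g(1) by (auto simp: h_def)
    moreover have "sat_g {p\<in>S. h p = i} ((\<phi> # ?xs)!i)" if "i < length (\<phi> # ?xs)" for i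
    proof (cases i)
      case 0
      have "{p\<in>S. h p = i} \<subseteq> T1" using 0 T(1) by (auto simp: h_def)
      then show ?thesis using 0 sat_g_mono[OF T(2)] by simp
    next
      case (Suc j)
      have "{p\<in>S. h p = i} = {p\<in>T2. g p = j}" using T(1) Suc by (auto simp: h_def)
      moreover have "j < length ?xs" using that Suc by simp
      ultimately show ?thesis using g(2)[rule_format, of j] Suc by simp
    qed
    ultimately show "\<exists>g. (\<forall>p\<in>S. g p < length (\<phi> # ?xs)) \<and>
        (\<forall>i<length (\<phi> # ?xs). sat_g {p\<in>S. g p = i} ((\<phi> # ?xs)!i))" by blast
  next
    assume "\<exists>g. (\<forall>p\<in>S. g p < length (\<phi> # ?xs)) \<and>
        (\<forall>i<length (\<phi> # ?xs). sat_g {p\<in>S. g p = i} ((\<phi> # ?xs)!i))"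
    then obtain g where g: "\<forall>p\<in>S. g p < length (\<phi> # ?xs)"
        "\<forall>i<length (\<phi> # ?xs). sat_g {p\<in>S. g p = i} ((\<phi> # ?xs)!i)" by blast
    let ?T1 = "{p\<in>S. g p = 0}" and ?T2 = "{p\<in>S. g p \<noteq> 0}"
    have "sat_g ?T1 \<phi>" using g(2)[rule_format, of 0] by simp
    moreover have "sat_g ?T2 (ors b ?xs)"
    proof -
      have a1: "\<forall>p\<in>?T2. g p - 1 < length ?xs" using g(1) by auto
      have a2: "sat_g {p\<in>?T2. g p - 1 = i} (?xs!i)" if "i < length ?xs" for i
      proof -
        have "{p\<in>?T2. g p - 1 = i} = {p\<in>S. g p = Suc i}" by auto
        then show ?thesis using g(2)[rule_format, of "Suc i"] that by simp
      qed
      have ne: "?xs \<noteq> []" by simp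
      show ?thesis unfolding 3(1)[OF ne] by (rule exI[of _ "\<lambda>p. g p - 1"]) (use a1 a2 in blast)
    qed
    moreover have "S = ?T1 \<union> ?T2" by auto
    ultimately have "sat_g S (Or \<phi> (ors b ?xs))" by (simp only: sat_g.simps) blast
    then show "sat_g S (ors b (\<phi> # ?xs))" by simp
  qed
qed

lemma sat_BigOr_flat:
  assumes fin: "finite A" and flat: "\<And>\<phi> U. \<phi> \<in> A \<Longrightarrow> U \<subseteq> S \<Longrightarrow> sat_g U \<phi> \<longleftrightarrow> (\<forall>p\<in>U. sat_g {p} \<phi>)"
  shows "sat_g S (BigOr Dom Ran A) \<longleftrightarrow> (\<forall>p\<in>S. \<exists>\<phi>\<in>A. sat_g {p} \<phi>)"
proof (cases "A = {}")
  case True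
  then show ?thesis using lst[OF fin] by (auto simp add: BigOr_def sat_Bot)
next
  case False
  let ?xs = "lst A"
  have xs: "set ?xs = A" "distinct ?xs" using lst[OF fin] by blast+
  have ne: "?xs \<noteq> []" using False xs(1) by (metis set_empty)
  show ?thesis
  proof
    assume "sat_g S (BigOr Dom Ran A)"
    then obtain g where g: "\<forall>p\<in>S. g p < length ?xs" "\<forall>i<length ?xs. sat_g {p\<in>S. g p = i} (?xs!i)"
      using sat_ors[OF ne] unfolding BigOr_def by blast
    show "\<forall>p\<in>S. \<exists>\<phi>\<in>A. sat_g {p} \<phi>"
    proof
      fix p assume p: "p \<in> S"
      then have "sat_g {q\<in>S. g q = g p} (?xs!(g p))" using g by auto
      then have "sat_g {p} (?xs!(g p))" by (rule sat_g_mono) (use p in auto)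
      moreover have "?xs!(g p) \<in> A" using g p xs(1) by (metis nth_mem)
      ultimately show "\<exists>\<phi>\<in>A. sat_g {p} \<phi>" by blast
    qed
  next
    assume H: "\<forall>p\<in>S. \<exists>\<phi>\<in>A. sat_g {p} \<phi>"
    define g where "g p = (SOME i. i < length ?xs \<and> sat_g {p} (?xs!i))" for p
    have gp: "g p < length ?xs \<and> sat_g {p} (?xs!(g p))" if "p \<in> S" for p
    proof -
      have "\<exists>\<phi>\<in>A. sat_g {p} \<phi>" using H that by (rule bspec)
      then obtain \<phi> where ph: "\<phi> \<in> A" "sat_g {p} \<phi>" by (elim bexE)
      then obtain i where "i < length ?xs" "?xs!i = \<phi>" using xs(1) by (metis in_set_conv_nth)
      then have "\<exists>i. i < length ?xs \<and> sat_g {p} (?xs!i)" using ph(2) by metis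
      then show ?thesis unfolding g_def by (rule someI_ex)
    qed
    have "sat_g {p\<in>S. g p = i} (?xs!i)" if "i < length ?xs" for i
    proof -
      have "?xs!i \<in> A" using that xs(1) by (metis nth_mem)
      then show ?thesis using flat[of "?xs!i" "{p\<in>S. g p = i}"] gp by auto
    qed
    then show "sat_g S (BigOr Dom Ran A)" unfolding BigOr_def using sat_ors[OF ne] gp by blast
  qed
qed

lemma sat_Or_flat:
  assumes "\<And>U. U \<subseteq> S \<Longrightarrow> sat_g U A \<longleftrightarrow> (\<forall>p\<in>U. PA p)"
    and "\<And>U. U \<subseteq> S \<Longrightarrow> sat_g U B \<longleftrightarrow> (\<forall>p\<in>U. PB p)"
  shows "sat_g S (Or A B) \<longleftrightarrow> (\<forall>p\<in>S. PA p \<or> PB p)"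
proof
  assume "sat_g S (Or A B)"
  then obtain T1 T2 where "S = T1 \<union> T2" "sat_g T1 A" "sat_g T2 B" by auto
  then show "\<forall>p\<in>S. PA p \<or> PB p" using assms by blast
next
  assume H: "\<forall>p\<in>S. PA p \<or> PB p"
  have "sat_g {p\<in>S. PA p} A" "sat_g {p\<in>S. \<not> PA p} B" using assms H by auto
  moreover have "S = {p\<in>S. PA p} \<union> {p\<in>S. \<not> PA p}" by auto
  ultimately show "sat_g S (Or A B)" by (simp only: sat_g.simps) blast
qed



definition val :: "('v, 'a) sys \<Rightarrow> ('v \<Rightarrow> 'a) \<Rightarrow> 'v \<Rightarrow> ('v \<Rightarrow> 'a) \<Rightarrow> 'a" where
  "val F s V w = (if V \<in> en F then fn F V (restrict w (pa F V)) else s V)"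

definition nv :: "('v \<Rightarrow> 'a set) \<Rightarrow> ('v, 'a) sys \<Rightarrow> ('v \<Rightarrow> 'a) \<Rightarrow> 'v \<Rightarrow> ('v \<Rightarrow> 'a) \<Rightarrow> 'a" where
  "nv Ran F s V w = (if V \<in> en F - Cn Ran F then fn F V (restrict w (pa F V)) else s V)"

lemma consistent_ante: "consistent (ante W w)"
  unfolding consistent_def ante_def by auto

lemma restrict_PiE_sub: "w \<in> PiE D Ran \<Longrightarrow> P \<subseteq> D \<Longrightarrow> restrict w P \<in> PiE P Ran"
  by (auto simp: PiE_iff)

locale sig =
  fixes Dom :: "'v set" and Ran :: "'v \<Rightarrow> 'a set"
  assumes sig: "signature Dom Ran"
begin

lemma finDom: "finite Dom" and neDom: "Dom \<noteq> {}"
  and finRan: "X \<in> Dom \<Longrightarrow> finite (Ran X)" and neRan: "X \<in> Dom \<Longrightarrow> Ran X \<noteq> {}"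
  using sig by (auto simp: signature_def)

lemma set_ante: "set (ante (Dom - {V}) w) = (\<lambda>X. (X, w X)) ` (Dom - {V})"
  using lst[of "Dom - {V}"] finDom by (simp add: ante_def)

lemma fst_set_ante: "fst ` set (ante (Dom - {V}) w) = Dom - {V}"
  unfolding set_ante by force

lemma wf_pa: "wf_sys Dom Ran F \<Longrightarrow> V \<in> en F \<Longrightarrow> pa F V \<subseteq> Dom - {V}"
  unfolding wf_sys_def by blast

lemma wf_en: "wf_sys Dom Ran F \<Longrightarrow> en F \<subseteq> Dom"
  unfolding wf_sys_def by blast

lemma do_asg_full:
  assumes F: "wf_sys Dom Ran F" and V: "V \<in> Dom"
  shows "do_asg F (ante (Dom - {V}) w) s =
    (\<lambda>X. if X \<in> Dom - {V} then w X else if X = V then val F s V w else s X)"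
    (is "_ = ?t0")
proof -
  let ?xs = "ante (Dom - {V}) w"
  let ?P = "\<lambda>t. (\<forall>(X, x)\<in>set ?xs. t X = x) \<and>
     (\<forall>U. U \<notin> en F \<and> U \<notin> fst ` set ?xs \<longrightarrow> t U = s U) \<and>
     (\<forall>U\<in>en F - fst ` set ?xs. t U = fn F U (restrict t (pa F U)))"
  have enD: "en F \<subseteq> Dom" using wf_en[OF F] .
  have rt: "restrict t (pa F V) = restrict w (pa F V)"
    if "V \<in> en F" "\<forall>X\<in>Dom - {V}. t X = w X" for t
    using wf_pa[OF F that(1)] that(2) unfolding restrict_def by (intro ext) auto
  have "?P ?t0"
  proof -
    have "restrict ?t0 (pa F V) = restrict w (pa F V)" if "V \<in> en F"
      using rt[of ?t0] that by auto
    note r = this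
    have c1: "\<forall>(X, x)\<in>set ?xs. ?t0 X = x" unfolding set_ante by auto
    have fs: "fst ` set ?xs = Dom - {V}" unfolding set_ante by (auto simp: image_image)
    have c2: "\<forall>U. U \<notin> en F \<and> U \<notin> fst ` set ?xs \<longrightarrow> ?t0 U = s U"
      unfolding fs by (auto simp: val_def)
    have c3: "\<forall>U\<in>en F - fst ` set ?xs. ?t0 U = fn F U (restrict ?t0 (pa F U))"
    proof
      fix U assume U: "U \<in> en F - fst ` set ?xs"
      then have "U = V" "V \<in> en F" using enD unfolding fs by auto
      then show "?t0 U = fn F U (restrict ?t0 (pa F U))" using r by (simp add: val_def)
    qed
    show ?thesis using c1 c2 c3 by blast
  qed
  moreover have "t = ?t0" if "?P t" for t
  proof
    fix X
    have t1: "\<forall>X\<in>Dom - {V}. t X = w X" using that unfolding set_ante by auto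
    show "t X = ?t0 X"
    proof (cases "X \<in> Dom - {V}")
      case True then show ?thesis using t1 by simp
    next
      case False
      show ?thesis
      proof (cases "X = V")
        case True
        show ?thesis
        proof (cases "V \<in> en F")
          case True
          then have "t V = fn F V (restrict t (pa F V))" using that unfolding set_ante by (auto simp: image_image)
          then show ?thesis using rt[OF True t1] True \<open>X = V\<close> by (simp add: val_def)
        next
          case False
          then show ?thesis using that \<open>X = V\<close> unfolding set_ante by (auto simp: val_def image_image)
        qed
      next
        case False
        then have "X \<notin> en F" using \<open>X \<notin> Dom - {V}\<close> enD by auto
        then show ?thesis using that False \<open>X \<notin> Dom - {V}\<close> unfolding set_ante by (auto simp: image_image)
      qed
    qed
  qed
  ultimately show ?thesis unfolding do_asg_def by (rule the_equality)
qed

lemma do_asg_V: "wf_sys Dom Ran F \<Longrightarrow> V \<in> Dom \<Longrightarrow> do_asg F (ante (Dom - {V}) w) s V = val F s V w"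
  by (simp add: do_asg_full)

lemma sat_Cf_Dep:
  assumes S: "gen_team Dom Ran S" and V: "V \<in> Dom"
  shows "sat_g S (Cf (ante (Dom - {V}) w) (Dep V)) \<longleftrightarrow>
     (\<forall>p\<in>S. \<forall>q\<in>S. val (snd p) (fst p) V w = val (snd q) (fst q) V w)"
proof -
  let ?f = "\<lambda>(s, F). (do_asg F (ante (Dom - {V}) w) s, do_sys F (ante (Dom - {V}) w))"
  have wf: "wf_sys Dom Ran (snd p)" if "p \<in> S" for p using S that unfolding gen_team_def by auto
  have fv: "fst (?f p) V = val (snd p) (fst p) V w" if "p \<in> S" for p
    using do_asg_V[OF wf[OF that] V] by (simp add: case_prod_beta)
  have "sat_g S (Cf (ante (Dom - {V}) w) (Dep V)) \<longleftrightarrow> (\<forall>a\<in>?f ` S. \<forall>b\<in>?f ` S. fst a V = fst b V)"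
    using consistent_ante[of "Dom - {V}" w] by (simp add: case_prod_beta)
  also have "\<dots> \<longleftrightarrow> (\<forall>p\<in>S. \<forall>q\<in>S. fst (?f p) V = fst (?f q) V)" by blast
  also have "\<dots> \<longleftrightarrow> (\<forall>p\<in>S. \<forall>q\<in>S. val (snd p) (fst p) V w = val (snd q) (fst q) V w)"
    using fv by auto
  finally show ?thesis .
qed

lemma sat_Cf_Eq:
  assumes S: "gen_team Dom Ran S" and V: "V \<in> Dom"
  shows "sat_g S (Cf (ante (Dom - {V}) w) (Eq V x)) \<longleftrightarrow> (\<forall>p\<in>S. val (snd p) (fst p) V w = x)"
proof -
  let ?f = "\<lambda>(s, F). (do_asg F (ante (Dom - {V}) w) s, do_sys F (ante (Dom - {V}) w))"
  have wf: "wf_sys Dom Ran (snd p)" if "p \<in> S" for p using S that unfolding gen_team_def by auto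
  have fv: "fst (?f p) V = val (snd p) (fst p) V w" if "p \<in> S" for p
    using do_asg_V[OF wf[OF that] V] by (simp add: case_prod_beta)
  have "sat_g S (Cf (ante (Dom - {V}) w) (Eq V x)) \<longleftrightarrow> (\<forall>a\<in>?f ` S. fst a V = x)"
    using consistent_ante[of "Dom - {V}" w] by (simp add: case_prod_beta)
  also have "\<dots> \<longleftrightarrow> (\<forall>p\<in>S. fst (?f p) V = x)" by blast
  also have "\<dots> \<longleftrightarrow> (\<forall>p\<in>S. val (snd p) (fst p) V w = x)"
    using fv by auto
  finally show ?thesis .
qed

end


context sig begin

lemma ext2:
  assumes PQ: "P \<subseteq> Dom - {V}" "Q \<subseteq> Dom - {V}" and p: "p \<in> PiE P Ran" and r: "r \<in> PiE Q Ran"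
    and agree: "\<forall>X\<in>P\<inter>Q. p X = r X"
  shows "\<exists>w\<in>PiE (Dom - {V}) Ran. restrict w P = p \<and> restrict w Q = r"
proof -
  define w where "w X = (if X \<in> P then p X else if X \<in> Q then r X
      else if X \<in> Dom - {V} then (SOME x. x \<in> Ran X) else undefined)" for X
  have "w \<in> PiE (Dom - {V}) Ran"
  proof (rule PiE_I)
    fix X assume X: "X \<in> Dom - {V}"
    show "w X \<in> Ran X"
    proof (cases "X \<in> P")
      case True then show ?thesis using p by (auto simp: w_def)
    next
      case False
      show ?thesis
      proof (cases "X \<in> Q")
        case True then show ?thesis using r False by (auto simp: w_def)
      next
        case False2: False
        have "Ran X \<noteq> {}" using neRan X by auto
        then show ?thesis using False False2 X by (auto simp: w_def some_in_eq)
      qed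
    qed
  next
    fix X assume "X \<notin> Dom - {V}"
    then show "w X = undefined" using PQ by (auto simp: w_def)
  qed
  moreover have "restrict w P = p"
  proof
    fix X show "restrict w P X = p X"
      by (cases "X \<in> P") (simp_all add: w_def PiE_arb[OF p])
  qed
  moreover have "restrict w Q = r"
  proof
    fix X show "restrict w Q X = r X"
      using agree by (cases "X \<in> Q") (simp_all add: w_def PiE_arb[OF r])
  qed
  ultimately show ?thesis by blast
qed

lemma asgD: "s \<in> assignments Dom Ran \<Longrightarrow> s \<in> PiE Dom Ran"
  by (simp add: assignments_def)

lemma val_nv:
  assumes F: "wf_sys Dom Ran F" and c: "compatible Dom Ran s F" and V: "V \<in> Dom"
    and w: "w \<in> PiE (Dom - {V}) Ran"
  shows "val F s V w = nv Ran F s V w"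
proof (cases "V \<in> Cn Ran F")
  case True
  then have enV: "V \<in> en F" by (simp add: Cn_def)
  have pa: "pa F V \<subseteq> Dom - {V}" using wf_pa[OF F enV] .
  have sV: "s V = fn F V (restrict s (pa F V))" using c enV by (simp add: compatible_def)
  have "restrict s (pa F V) \<in> PiE (pa F V) Ran"
    using restrict_PiE_sub[OF asgD] c pa by (auto simp: compatible_def)
  moreover have "restrict w (pa F V) \<in> PiE (pa F V) Ran" using restrict_PiE_sub[OF w pa] .
  ultimately have "fn F V (restrict w (pa F V)) = fn F V (restrict s (pa F V))"
    using True by (simp add: Cn_def)
  then show ?thesis using True enV sV by (simp add: val_def nv_def)
next
  case False
  then show ?thesis by (simp add: val_def nv_def)
qed

lemma nv_en:
  assumes F: "wf_sys Dom Ran F" and G: "wf_sys Dom Ran G"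
    and H: "\<forall>V\<in>Dom. \<forall>w\<in>PiE (Dom - {V}) Ran. nv Ran F s V w = nv Ran G s V w"
    and V: "V \<in> en F - Cn Ran F"
  shows "V \<in> en G - Cn Ran G"
proof (rule ccontr)
  assume nG: "V \<notin> en G - Cn Ran G"
  have VD: "V \<in> Dom" using V wf_en[OF F] by auto
  have pa: "pa F V \<subseteq> Dom - {V}" using wf_pa[OF F] V by auto
  have fw: "fn F V (restrict w (pa F V)) = s V" if "w \<in> PiE (Dom - {V}) Ran" for w
  proof -
    have "nv Ran G s V w = s V" using nG unfolding nv_def by (simp only: if_False)
    moreover have "nv Ran F s V w = fn F V (restrict w (pa F V))" using V by (simp add: nv_def)
    ultimately show ?thesis using H[rule_format, OF VD that] by simp
  qed
  have "fn F V p = s V" if pp: "p \<in> PiE (pa F V) Ran" for p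
  proof -
    obtain w where "w \<in> PiE (Dom - {V}) Ran" "restrict w (pa F V) = p"
      using ext2[OF pa pa pp pp] by auto
    then show ?thesis using fw by metis
  qed
  then have "V \<in> Cn Ran F" using V by (simp add: Cn_def)
  then show False using V by simp
qed

lemma nv_sim:
  assumes F: "wf_sys Dom Ran F" and G: "wf_sys Dom Ran G"
  shows "(\<forall>V\<in>Dom. \<forall>w\<in>PiE (Dom - {V}) Ran. nv Ran F s V w = nv Ran G s V w) \<longleftrightarrow> sim Ran F G"
proof
  assume H: "\<forall>V\<in>Dom. \<forall>w\<in>PiE (Dom - {V}) Ran. nv Ran F s V w = nv Ran G s V w"
  have H': "\<forall>V\<in>Dom. \<forall>w\<in>PiE (Dom - {V}) Ran. nv Ran G s V w = nv Ran F s V w" using H by auto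
  have eq: "en F - Cn Ran F = en G - Cn Ran G"
    using nv_en[OF F G H] nv_en[OF G F H'] by blast
  have "sim_fn Ran F G V" if V: "V \<in> en F - Cn Ran F" for V
    unfolding sim_fn_def
  proof (intro ballI impI)
    fix p q assume p: "p \<in> PiE (pa F V) Ran" and q: "q \<in> PiE (pa G V) Ran"
      and ag: "\<forall>X\<in>pa F V \<inter> pa G V. p X = q X"
    have VG: "V \<in> en G - Cn Ran G" using V eq by auto
    have VD: "V \<in> Dom" using V wf_en[OF F] by auto
    obtain w where w: "w \<in> PiE (Dom - {V}) Ran" "restrict w (pa F V) = p" "restrict w (pa G V) = q"
      using ext2[OF wf_pa[OF F] wf_pa[OF G] p q ag] V VG by auto
    show "fn F V p = fn G V q" using H[rule_format, OF VD w(1)] V VG w(2,3) by (simp add: nv_def)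
  qed
  then show "sim Ran F G" using eq by (simp add: sim_def)
next
  assume S: "sim Ran F G"
  show "\<forall>V\<in>Dom. \<forall>w\<in>PiE (Dom - {V}) Ran. nv Ran F s V w = nv Ran G s V w"
  proof (intro ballI)
    fix V w assume VD: "V \<in> Dom" and w: "w \<in> PiE (Dom - {V}) Ran"
    show "nv Ran F s V w = nv Ran G s V w"
    proof (cases "V \<in> en F - Cn Ran F")
      case True
      then have VG: "V \<in> en G - Cn Ran G" using S unfolding sim_def by blast
      have sf: "sim_fn Ran F G V" using S True by (simp add: sim_def)
      have p: "restrict w (pa F V) \<in> PiE (pa F V) Ran" using restrict_PiE_sub[OF w wf_pa[OF F]] True by auto
      have q: "restrict w (pa G V) \<in> PiE (pa G V) Ran" using restrict_PiE_sub[OF w wf_pa[OF G]] VG by auto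
      have "fn F V (restrict w (pa F V)) = fn G V (restrict w (pa G V))"
        using sf p q unfolding sim_fn_def by auto
      then show ?thesis using True VG by (simp add: nv_def)
    next
      case False
      then have "V \<notin> en G - Cn Ran G" using S unfolding sim_def by blast
      then show ?thesis using False unfolding nv_def by (simp only: if_False)
    qed
  qed
qed

lemma sim_refl: "wf_sys Dom Ran F \<Longrightarrow> sim Ran F F"
  using nv_sim[of F F undefined] by simp

lemma sim_sym: "wf_sys Dom Ran F \<Longrightarrow> wf_sys Dom Ran G \<Longrightarrow> sim Ran F G \<Longrightarrow> sim Ran G F"
  using nv_sim[of F G undefined] nv_sim[of G F undefined] by metis

lemma sim_trans: "wf_sys Dom Ran F \<Longrightarrow> wf_sys Dom Ran G \<Longrightarrow> wf_sys Dom Ran H \<Longrightarrow>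
   sim Ran F G \<Longrightarrow> sim Ran G H \<Longrightarrow> sim Ran F H"
  using nv_sim[of F G undefined] nv_sim[of G H undefined] nv_sim[of F H undefined] by metis

definition key :: "('v \<Rightarrow> 'a) \<times> ('v, 'a) sys \<Rightarrow> ('v \<Rightarrow> 'a) \<times> ('v, 'a) sys set" where
  "key p = (fst p, {F. wf_sys Dom Ran F \<and> sim Ran (snd p) F})"

lemma key_eq:
  assumes "wf_sys Dom Ran (snd p)" "wf_sys Dom Ran (snd q)"
  shows "key p = key q \<longleftrightarrow> fst p = fst q \<and> sim Ran (snd p) (snd q)"
proof
  assume k: "key p = key q"
  then have "snd q \<in> {F. wf_sys Dom Ran F \<and> sim Ran (snd p) F}"
    using assms sim_refl[of "snd q"] by (simp add: key_def)
  then show "fst p = fst q \<and> sim Ran (snd p) (snd q)" using k by (simp add: key_def)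
next
  assume "fst p = fst q \<and> sim Ran (snd p) (snd q)"
  then show "key p = key q" using assms sim_sym sim_trans unfolding key_def by blast
qed

lemma finite_wf: "finite {F. wf_sys Dom Ran F}"
proof -
  define B where "B = insert (\<lambda>_. undefined) (\<Union>P\<in>Pow Dom. \<Union>V\<in>Dom. PiE (PiE P Ran) (\<lambda>_. Ran V))"
  have fB: "finite B"
  proof -
    have "finite (PiE (PiE P Ran) (\<lambda>_. Ran V))" if "P \<in> Pow Dom" "V \<in> Dom" for P V
    proof (rule finite_PiE)
      show "finite (PiE P Ran)" using that finDom finRan by (intro finite_PiE) (auto intro: finite_subset)
      show "\<And>i. i \<in> PiE P Ran \<Longrightarrow> finite (Ran V)" using finRan that by auto
    qed
    then show ?thesis using finDom unfolding B_def by auto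
  qed
  define PA where "PA = {f :: 'v \<Rightarrow> 'v set. \<forall>x. (x \<in> Dom \<longrightarrow> f x \<in> Pow Dom) \<and> (x \<notin> Dom \<longrightarrow> f x = {})}"
  define FN where "FN = {f. \<forall>x. (x \<in> Dom \<longrightarrow> f x \<in> B) \<and> (x \<notin> Dom \<longrightarrow> f x = (\<lambda>_. undefined))}"
  have fPA: "finite PA" unfolding PA_def using finDom by (intro finite_set_of_finite_funs) auto
  have fFN: "finite FN" unfolding FN_def using finDom fB by (intro finite_set_of_finite_funs) auto
  have "{F. wf_sys Dom Ran F} \<subseteq> (\<lambda>(e, p, f). \<lparr>en = e, pa = p, fn = f\<rparr>) ` (Pow Dom \<times> PA \<times> FN)"
  proof
    fix F assume "F \<in> {F. wf_sys Dom Ran F}"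
    then have F: "wf_sys Dom Ran F" by simp
    have e: "en F \<in> Pow Dom" using wf_en[OF F] by simp
    have p: "pa F \<in> PA" unfolding PA_def mem_Collect_eq
    proof (intro allI conjI impI)
      fix x assume "x \<in> Dom" then show "pa F x \<in> Pow Dom"
        using F unfolding wf_sys_def by (cases "x \<in> en F") auto
    next
      fix x assume "x \<notin> Dom" then show "pa F x = {}" using F unfolding wf_sys_def by auto
    qed
    have f: "fn F \<in> FN" unfolding FN_def mem_Collect_eq
    proof (intro allI conjI impI)
      fix x assume x: "x \<in> Dom" show "fn F x \<in> B"
      proof (cases "x \<in> en F")
        case True
        then have "pa F x \<in> Pow Dom" "fn F x \<in> PiE (PiE (pa F x) Ran) (\<lambda>_. Ran x)"
          using F unfolding wf_sys_def by auto
        then show ?thesis using x unfolding B_def by blast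
      next
        case False then show ?thesis using F unfolding wf_sys_def B_def by auto
      qed
    next
      fix x assume "x \<notin> Dom" then show "fn F x = (\<lambda>_. undefined)" using F unfolding wf_sys_def by auto
    qed
    have eqF: "F = \<lparr>en = en F, pa = pa F, fn = fn F\<rparr>" by simp
    show "F \<in> (\<lambda>(e, p, f). \<lparr>en = e, pa = p, fn = f\<rparr>) ` (Pow Dom \<times> PA \<times> FN)"
    proof (rule image_eqI[where x="(en F, pa F, fn F)"])
      show "F = (\<lambda>(e, p, f). \<lparr>en = e, pa = p, fn = f\<rparr>) (en F, pa F, fn F)"
        using eqF by (simp only: case_prod_conv)
      show "(en F, pa F, fn F) \<in> Pow Dom \<times> PA \<times> FN" using e p f by (simp only: mem_Times_iff fst_conv snd_conv)
    qed
  qed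
  moreover have "finite ((\<lambda>(e, p, f). \<lparr>en = e, pa = p, fn = f\<rparr>) ` (Pow Dom \<times> PA \<times> FN))"
    using finDom fPA fFN by auto
  ultimately show ?thesis by (rule finite_subset)
qed

lemma finite_asg: "finite (assignments Dom Ran)"
  unfolding assignments_def using finDom finRan by (intro finite_PiE) auto

lemma gen_team_sub: "gen_team Dom Ran S \<Longrightarrow> S \<subseteq> assignments Dom Ran \<times> {F. wf_sys Dom Ran F}"
  unfolding gen_team_def compatible_def by auto

lemma gen_team_finite: "gen_team Dom Ran S \<Longrightarrow> finite S"
  using gen_team_sub finite_asg finite_wf by (meson finite_SigmaI finite_subset)

lemma gen_team_wf: "gen_team Dom Ran S \<Longrightarrow> p \<in> S \<Longrightarrow> wf_sys Dom Ran (snd p)"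
  unfolding gen_team_def by auto

lemma gen_team_compat: "gen_team Dom Ran S \<Longrightarrow> p \<in> S \<Longrightarrow> compatible Dom Ran (fst p) (snd p)"
  unfolding gen_team_def by auto

lemma gen_team_subset: "gen_team Dom Ran S \<Longrightarrow> U \<subseteq> S \<Longrightarrow> gen_team Dom Ran U"
  unfolding gen_team_def by auto

lemma num_classes_key:
  assumes T: "gen_team Dom Ran T"
  shows "num_classes Ran T = card (key ` T)"
proof -
  let ?c = "\<lambda>k. {q\<in>T. key q = k}"
  have "(\<lambda>(s, F). {(t, G)\<in>T. t = s \<and> sim Ran F G}) ` T = ?c ` key ` T"
    unfolding image_image
  proof (rule image_cong[OF refl])
    fix p assume p: "p \<in> T"
    show "(\<lambda>(s, F). {(t, G)\<in>T. t = s \<and> sim Ran F G}) p = {q\<in>T. key q = key p}"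
    proof -
      have "q \<in> T \<Longrightarrow> (key q = key p) = (fst p = fst q \<and> sim Ran (snd p) (snd q))" for q
        using key_eq[of q p] key_eq[of p q] gen_team_wf[OF T] p by metis
      then show ?thesis by (auto simp: case_prod_beta)
    qed
  qed
  moreover have "inj_on ?c (key ` T)"
  proof (rule inj_onI)
    fix k k' assume "k \<in> key ` T" "k' \<in> key ` T" "?c k = ?c k'"
    then show "k = k'" by blast
  qed
  ultimately show ?thesis unfolding num_classes_def by (simp add: card_image)
qed

end


context sig begin

lemma asg_fst: "gen_team Dom Ran S \<Longrightarrow> p \<in> S \<Longrightarrow> fst p \<in> assignments Dom Ran"
  using gen_team_compat compatible_def by blast

lemma sat_Eqs:
  assumes S: "gen_team Dom Ran S" and s: "s \<in> assignments Dom Ran"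
  shows "sat_g S (BigAnd Dom Ran ((\<lambda>V. Eq V (s V)) ` Dom)) \<longleftrightarrow> (\<forall>p\<in>S. fst p = s)"
proof -
  have "sat_g S (BigAnd Dom Ran ((\<lambda>V. Eq V (s V)) ` Dom)) \<longleftrightarrow> (\<forall>V\<in>Dom. \<forall>p\<in>S. fst p V = s V)"
    using finDom by (simp add: sat_BigAnd case_prod_beta)
  also have "\<dots> \<longleftrightarrow> (\<forall>p\<in>S. fst p = s)"
  proof
    assume H: "\<forall>V\<in>Dom. \<forall>p\<in>S. fst p V = s V"
    show "\<forall>p\<in>S. fst p = s"
    proof
      fix p assume p: "p \<in> S"
      show "fst p = s" using asg_fst[OF S p] s H p unfolding assignments_def by (intro PiE_ext) auto
    qed
  qed auto
  finally show ?thesis .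
qed

lemma sat_Theta:
  assumes S: "gen_team Dom Ran S" and A: "A \<subseteq> assignments Dom Ran"
  shows "sat_g S (Theta Dom Ran A) \<longleftrightarrow> (\<forall>p\<in>S. fst p \<in> A)"
proof -
  let ?f = "\<lambda>s. BigAnd Dom Ran ((\<lambda>V. Eq V (s V)) ` Dom)"
  have finA: "finite A" using A finite_asg finite_subset by blast
  have fl: "sat_g U \<phi> \<longleftrightarrow> (\<forall>p\<in>U. sat_g {p} \<phi>)" if ph: "\<phi> \<in> ?f ` A" and US: "U \<subseteq> S" for \<phi> U
  proof -
    obtain s where s: "s \<in> A" "\<phi> = ?f s" using ph by blast
    have U: "gen_team Dom Ran U" using gen_team_subset[OF S US] .
    have sA: "s \<in> assignments Dom Ran" using s A by auto
    have "sat_g U \<phi> \<longleftrightarrow> (\<forall>p\<in>U. fst p = s)" using sat_Eqs[OF U sA] s(2) by simp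
    moreover have "sat_g {p} \<phi> \<longleftrightarrow> fst p = s" if "p \<in> U" for p
      using sat_Eqs[OF gen_team_subset[OF U, of "{p}"] sA] that s(2) by auto
    ultimately show ?thesis by auto
  qed
  have "sat_g S (Theta Dom Ran A) \<longleftrightarrow> (\<forall>p\<in>S. \<exists>\<phi>\<in>?f ` A. sat_g {p} \<phi>)"
    unfolding Theta_def using finA by (intro sat_BigOr_flat fl) auto
  also have "\<dots> \<longleftrightarrow> (\<forall>p\<in>S. fst p \<in> A)"
  proof -
    have "(\<exists>\<phi>\<in>?f ` A. sat_g {p} \<phi>) \<longleftrightarrow> fst p \<in> A" if "p \<in> S" for p
    proof -
      have g: "gen_team Dom Ran {p}" using gen_team_subset[OF S] that by auto
      have "sat_g {p} (?f s) \<longleftrightarrow> fst p = s" if "s \<in> A" for s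
        using sat_Eqs[OF g] that A by auto
      then show ?thesis by auto
    qed
    then show ?thesis by auto
  qed
  finally show ?thesis .
qed

lemma sat_Phi:
  assumes S: "gen_team Dom Ran S" and F: "wf_sys Dom Ran F"
  shows "sat_g S (Phi Dom Ran F) \<longleftrightarrow> (\<forall>p\<in>S. sim Ran (snd p) F)"
proof -
  let ?Q = "\<lambda>p V w. nv Ran (snd p) (fst p) V w = nv Ran F (fst p) V w"
  have wfp: "wf_sys Dom Ran (snd p)" if "p \<in> S" for p using gen_team_wf[OF S that] .
  have cp: "compatible Dom Ran (fst p) (snd p)" if "p \<in> S" for p using gen_team_compat[OF S that] .
  have eta: "sat_g S (eta Dom Ran F V) \<longleftrightarrow> (\<forall>w\<in>PiE (Dom - {V}) Ran. \<forall>p\<in>S. ?Q p V w)"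
    if V: "V \<in> en F - Cn Ran F" for V
  proof -
    have VD: "V \<in> Dom" using V wf_en[OF F] by auto
    have fin: "finite (PiE (Dom - {V}) Ran)" using finDom finRan by (intro finite_PiE) auto
    have "sat_g S (eta Dom Ran F V) \<longleftrightarrow> (\<forall>w\<in>PiE (Dom - {V}) Ran.
        sat_g S (Cf (ante (Dom - {V}) w) (Eq V (fn F V (restrict w (pa F V))))))"
      unfolding eta_def using fin by (simp add: sat_BigAnd)
    also have "\<dots> \<longleftrightarrow> (\<forall>w\<in>PiE (Dom - {V}) Ran. \<forall>p\<in>S. val (snd p) (fst p) V w = fn F V (restrict w (pa F V)))"
      using sat_Cf_Eq[OF S VD] by simp
    also have "\<dots> \<longleftrightarrow> (\<forall>w\<in>PiE (Dom - {V}) Ran. \<forall>p\<in>S. ?Q p V w)"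
      using val_nv[OF wfp cp VD] V by (simp add: nv_def[of Ran F])
    finally show ?thesis .
  qed
  have xi: "sat_g S (xi Dom Ran V) \<longleftrightarrow> (\<forall>w\<in>PiE (Dom - {V}) Ran. \<forall>p\<in>S. ?Q p V w)"
    if V: "V \<in> Dom - (en F - Cn Ran F)" for V
  proof -
    have VD: "V \<in> Dom" using V by auto
    have nin: "V \<notin> en F - Cn Ran F" using V by blast
    have nvF: "nv Ran F t V w = t V" for t w unfolding nv_def by (rule if_not_P[OF nin])
    have e: "(val (snd p) (fst p) V w = fst p V) = ?Q p V w" if "p \<in> S" "w \<in> PiE (Dom - {V}) Ran" for p w
      using val_nv[OF wfp[OF that(1)] cp[OF that(1)] VD that(2)] nvF[of "fst p" w] by simp
    let ?g = "\<lambda>x. Or (Neg (Eq V (fst x))) (Cf (ante (Dom - {V}) (snd x)) (Eq V (fst x)))"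
    have set: "{Or (Neg (Eq V v)) (Cf (ante (Dom - {V}) w) (Eq V v)) | v w. v \<in> Ran V \<and> w \<in> PiE (Dom - {V}) Ran}
        = ?g ` (Ran V \<times> PiE (Dom - {V}) Ran)"
    proof (intro equalityI subsetI)
      fix \<phi> assume "\<phi> \<in> {Or (Neg (Eq V v)) (Cf (ante (Dom - {V}) w) (Eq V v)) | v w. v \<in> Ran V \<and> w \<in> PiE (Dom - {V}) Ran}"
      then obtain v w where vw: "\<phi> = Or (Neg (Eq V v)) (Cf (ante (Dom - {V}) w) (Eq V v))" "v \<in> Ran V" "w \<in> PiE (Dom - {V}) Ran"
        by blast
      show "\<phi> \<in> ?g ` (Ran V \<times> PiE (Dom - {V}) Ran)"
        by (rule image_eqI[where x="(v, w)"]) (simp_all add: vw)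
    next
      fix \<phi> assume "\<phi> \<in> ?g ` (Ran V \<times> PiE (Dom - {V}) Ran)"
      then obtain x where x: "x \<in> Ran V \<times> PiE (Dom - {V}) Ran" "\<phi> = ?g x" by blast
      show "\<phi> \<in> {Or (Neg (Eq V v)) (Cf (ante (Dom - {V}) w) (Eq V v)) | v w. v \<in> Ran V \<and> w \<in> PiE (Dom - {V}) Ran}"
        using x by (intro CollectI exI[of _ "fst x"] exI[of _ "snd x"]) (simp add: mem_Times_iff)
    qed
    have fin: "finite (Ran V \<times> PiE (Dom - {V}) Ran)" using finDom finRan VD by (intro finite_SigmaI finite_PiE) auto
    have orr: "sat_g S (?g x) \<longleftrightarrow>
        (\<forall>p\<in>S. fst p V \<noteq> fst x \<or> val (snd p) (fst p) V (snd x) = fst x)" for x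
    proof (rule sat_Or_flat)
      fix U assume "U \<subseteq> S"
      show "sat_g U (Neg (Eq V (fst x))) \<longleftrightarrow> (\<forall>p\<in>U. fst p V \<noteq> fst x)" by auto
      show "sat_g U (Cf (ante (Dom - {V}) (snd x)) (Eq V (fst x))) \<longleftrightarrow> (\<forall>p\<in>U. val (snd p) (fst p) V (snd x) = fst x)"
        using sat_Cf_Eq[OF gen_team_subset[OF S \<open>U \<subseteq> S\<close>] VD] .
    qed
    have "sat_g S (xi Dom Ran V) \<longleftrightarrow> (\<forall>\<phi>\<in>?g ` (Ran V \<times> PiE (Dom - {V}) Ran). sat_g S \<phi>)"
      unfolding xi_def set using fin by (intro sat_BigAnd finite_imageI)
    also have "\<dots> \<longleftrightarrow> (\<forall>x\<in>Ran V \<times> PiE (Dom - {V}) Ran. sat_g S (?g x))" by blast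
    also have "\<dots> \<longleftrightarrow> (\<forall>x\<in>Ran V \<times> PiE (Dom - {V}) Ran.
        (\<forall>p\<in>S. fst p V \<noteq> fst x \<or> val (snd p) (fst p) V (snd x) = fst x))"
      by (simp only: orr)
    also have "\<dots> \<longleftrightarrow> (\<forall>v\<in>Ran V. \<forall>w\<in>PiE (Dom - {V}) Ran.
        (\<forall>p\<in>S. fst p V \<noteq> v \<or> val (snd p) (fst p) V w = v))"
      by auto
    also have "\<dots> \<longleftrightarrow> (\<forall>w\<in>PiE (Dom - {V}) Ran. \<forall>p\<in>S. val (snd p) (fst p) V w = fst p V)"
    proof -
      have "fst p V \<in> Ran V" if "p \<in> S" for p using asg_fst[OF S that] VD unfolding assignments_def by auto
      then show ?thesis by blast
    qed
    also have "\<dots> \<longleftrightarrow> (\<forall>w\<in>PiE (Dom - {V}) Ran. \<forall>p\<in>S. ?Q p V w)"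
      using e by blast
    finally show ?thesis .
  qed
  have finPhi: "finite (eta Dom Ran F ` (en F - Cn Ran F) \<union> xi Dom Ran ` (Dom - (en F - Cn Ran F)))"
    using finDom wf_en[OF F] by (meson finite_Diff finite_UnI finite_imageI finite_subset)
  have "sat_g S (Phi Dom Ran F) \<longleftrightarrow> (\<forall>V\<in>en F - Cn Ran F. sat_g S (eta Dom Ran F V)) \<and>
      (\<forall>V\<in>Dom - (en F - Cn Ran F). sat_g S (xi Dom Ran V))"
    unfolding Phi_def sat_BigAnd[OF finPhi] by blast
  also have "\<dots> \<longleftrightarrow> (\<forall>V\<in>Dom. \<forall>w\<in>PiE (Dom - {V}) Ran. \<forall>p\<in>S. ?Q p V w)"
  proof
    assume H: "(\<forall>V\<in>en F - Cn Ran F. sat_g S (eta Dom Ran F V)) \<and>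
      (\<forall>V\<in>Dom - (en F - Cn Ran F). sat_g S (xi Dom Ran V))"
    show "\<forall>V\<in>Dom. \<forall>w\<in>PiE (Dom - {V}) Ran. \<forall>p\<in>S. ?Q p V w"
    proof
      fix V assume VD: "V \<in> Dom"
      show "\<forall>w\<in>PiE (Dom - {V}) Ran. \<forall>p\<in>S. ?Q p V w"
      proof (cases "V \<in> en F - Cn Ran F")
        case True
        then show ?thesis using H eta[OF True] by simp
      next
        case False
        then have V: "V \<in> Dom - (en F - Cn Ran F)" using VD by simp
        then show ?thesis using H xi[OF V] by simp
      qed
    qed
  next
    assume H: "\<forall>V\<in>Dom. \<forall>w\<in>PiE (Dom - {V}) Ran. \<forall>p\<in>S. ?Q p V w"
    have "sat_g S (eta Dom Ran F V)" if V: "V \<in> en F - Cn Ran F" for V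
    proof -
      have "V \<in> Dom" using V wf_en[OF F] by auto
      then show ?thesis using H eta[OF V] by simp
    qed
    moreover have "sat_g S (xi Dom Ran V)" if V: "V \<in> Dom - (en F - Cn Ran F)" for V
    proof -
      have "V \<in> Dom" using V by auto
      then show ?thesis using H xi[OF V] by simp
    qed
    ultimately show "(\<forall>V\<in>en F - Cn Ran F. sat_g S (eta Dom Ran F V)) \<and>
      (\<forall>V\<in>Dom - (en F - Cn Ran F). sat_g S (xi Dom Ran V))" by blast
  qed
  also have "\<dots> \<longleftrightarrow> (\<forall>p\<in>S. \<forall>V\<in>Dom. \<forall>w\<in>PiE (Dom - {V}) Ran. ?Q p V w)" by blast
  also have "\<dots> \<longleftrightarrow> (\<forall>p\<in>S. sim Ran (snd p) F)"
    by (rule ball_cong[OF refl]) (rule nv_sim[OF wfp F])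
  finally show ?thesis .
qed

end


lemma to_gen_img: "to_gen T F = (\<lambda>s. (s, F)) ` T"
  by (auto simp: to_gen_def)

lemma sat_c_g: "sat_c T F \<phi> \<longleftrightarrow> sat_g (to_gen T F) \<phi>"
proof (induction \<phi> arbitrary: T F)
  case (Eq X x)
  then show ?case by (auto simp: to_gen_img)
next
  case (Dep V)
  then show ?case by (auto simp: to_gen_img)
next
  case (Neg \<alpha>)
  have "to_gen {s} F = {(s, F)}" for s by (simp add: to_gen_img)
  then show ?case using Neg.IH by (auto simp: to_gen_img)
next
  case (And \<phi>1 \<phi>2)
  then show ?case by simp
next
  case (Or \<phi>1 \<phi>2)
  show ?case
  proof
    assume "sat_c T F (Or \<phi>1 \<phi>2)"
    then obtain T1 T2 where T: "T1 \<subseteq> T" "T2 \<subseteq> T" "T1 \<union> T2 = T" "sat_c T1 F \<phi>1" "sat_c T2 F \<phi>2"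
      by (simp only: sat_c.simps) blast
    have "to_gen T F = to_gen T1 F \<union> to_gen T2 F" using T(3) by (auto simp: to_gen_img)
    moreover have "sat_g (to_gen T1 F) \<phi>1" "sat_g (to_gen T2 F) \<phi>2" using T(4,5) Or.IH by auto
    ultimately show "sat_g (to_gen T F) (Or \<phi>1 \<phi>2)" by (simp only: sat_g.simps) blast
  next
    assume "sat_g (to_gen T F) (Or \<phi>1 \<phi>2)"
    then obtain U1 U2 where U: "to_gen T F = U1 \<union> U2" "sat_g U1 \<phi>1" "sat_g U2 \<phi>2"
      by (simp only: sat_g.simps) blast
    have "U1 = to_gen (fst ` U1) F" "U2 = to_gen (fst ` U2) F"
      using U(1) unfolding to_gen_img by force+
    then have "sat_c (fst ` U1) F \<phi>1" "sat_c (fst ` U2) F \<phi>2" using U(2,3) Or.IH by auto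
    moreover have "fst ` U1 \<subseteq> T" "fst ` U2 \<subseteq> T" "fst ` U1 \<union> fst ` U2 = T"
      using U(1) unfolding to_gen_img by force+
    ultimately show "sat_c T F (Or \<phi>1 \<phi>2)" by (simp only: sat_c.simps) blast
  qed
next
  case (Cf xs \<phi>)
  have "(\<lambda>(s, F). (do_asg F xs s, do_sys F xs)) ` to_gen T F = to_gen (do_asg F xs ` T) (do_sys F xs)"
    unfolding to_gen_img by auto
  then show ?case using Cf.IH by simp
qed

context sig begin

lemma sat_chi:
  assumes S: "gen_team Dom Ran S"
  shows "sat_g S (chi Dom Ran) \<longleftrightarrow> (\<forall>p\<in>S. \<forall>q\<in>S. key p = key q)"
proof -
  let ?X = "Sigma Dom (\<lambda>V. PiE (Dom - {V}) Ran)"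
  let ?g = "\<lambda>x. Cf (ante (Dom - {fst x}) (snd x)) (Dep (fst x))"
  have set: "{Cf (ante (Dom - {V}) w) (Dep V) | V w. V \<in> Dom \<and> w \<in> PiE (Dom - {V}) Ran} = ?g ` ?X"
  proof (intro equalityI subsetI)
    fix \<phi> assume "\<phi> \<in> {Cf (ante (Dom - {V}) w) (Dep V) | V w. V \<in> Dom \<and> w \<in> PiE (Dom - {V}) Ran}"
    then obtain V w where vw: "\<phi> = Cf (ante (Dom - {V}) w) (Dep V)" "V \<in> Dom" "w \<in> PiE (Dom - {V}) Ran"
      by blast
    show "\<phi> \<in> ?g ` ?X" by (rule image_eqI[where x="(V, w)"]) (simp_all add: vw)
  next
    fix \<phi> assume "\<phi> \<in> ?g ` ?X"
    then obtain x where x: "x \<in> ?X" "\<phi> = ?g x" by blast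
    show "\<phi> \<in> {Cf (ante (Dom - {V}) w) (Dep V) | V w. V \<in> Dom \<and> w \<in> PiE (Dom - {V}) Ran}"
    proof -
      have "fst x \<in> Dom \<and> snd x \<in> PiE (Dom - {fst x}) Ran" using x(1) by (cases x) simp
      then show ?thesis using x(2) by blast
    qed
  qed
  have finX: "finite ?X" using finDom finRan by (intro finite_SigmaI finite_PiE) auto
  have wfp: "wf_sys Dom Ran (snd p)" if "p \<in> S" for p using gen_team_wf[OF S that] .
  have cp: "compatible Dom Ran (fst p) (snd p)" if "p \<in> S" for p using gen_team_compat[OF S that] .
  have A1: "sat_g S (BigAnd Dom Ran (?g ` ?X)) \<longleftrightarrow>
     (\<forall>x\<in>?X. \<forall>p\<in>S. \<forall>q\<in>S. val (snd p) (fst p) (fst x) (snd x) = val (snd q) (fst q) (fst x) (snd x))"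
  proof -
    have "sat_g S (BigAnd Dom Ran (?g ` ?X)) \<longleftrightarrow> (\<forall>\<phi>\<in>?g ` ?X. sat_g S \<phi>)"
      using finX by (intro sat_BigAnd finite_imageI)
    also have "\<dots> \<longleftrightarrow> (\<forall>x\<in>?X. sat_g S (?g x))" by blast
    also have "\<dots> \<longleftrightarrow> (\<forall>x\<in>?X. \<forall>p\<in>S. \<forall>q\<in>S. val (snd p) (fst p) (fst x) (snd x) = val (snd q) (fst q) (fst x) (snd x))"
    proof (rule ball_cong[OF refl])
      fix x assume "x \<in> ?X"
      then have "fst x \<in> Dom" by (cases x) simp
      then show "sat_g S (?g x) \<longleftrightarrow> (\<forall>p\<in>S. \<forall>q\<in>S. val (snd p) (fst p) (fst x) (snd x) = val (snd q) (fst q) (fst x) (snd x))"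
        by (rule sat_Cf_Dep[OF S])
    qed
    finally show ?thesis .
  qed
  have A2: "sat_g S (BigAnd Dom Ran (Dep ` Dom)) \<longleftrightarrow> (\<forall>V\<in>Dom. \<forall>p\<in>S. \<forall>q\<in>S. fst p V = fst q V)"
  proof -
    have "sat_g S (BigAnd Dom Ran (Dep ` Dom)) \<longleftrightarrow> (\<forall>\<phi>\<in>Dep ` Dom. sat_g S \<phi>)"
      using finDom by (intro sat_BigAnd finite_imageI)
    also have "\<dots> \<longleftrightarrow> (\<forall>V\<in>Dom. sat_g S (Dep V))" by blast
    also have "\<dots> \<longleftrightarrow> (\<forall>V\<in>Dom. \<forall>p\<in>S. \<forall>q\<in>S. fst p V = fst q V)" by (simp add: case_prod_beta)
    finally show ?thesis .
  qed
  have "sat_g S (chi Dom Ran) \<longleftrightarrow>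
     (\<forall>x\<in>?X. \<forall>p\<in>S. \<forall>q\<in>S. val (snd p) (fst p) (fst x) (snd x) = val (snd q) (fst q) (fst x) (snd x)) \<and>
     (\<forall>V\<in>Dom. \<forall>p\<in>S. \<forall>q\<in>S. fst p V = fst q V)"
    unfolding chi_def set sat_g.simps(4) A1 A2 ..
  also have "\<dots> \<longleftrightarrow> (\<forall>p\<in>S. \<forall>q\<in>S. fst p = fst q \<and> sim Ran (snd p) (snd q))"
  proof
    assume H: "(\<forall>x\<in>?X. \<forall>p\<in>S. \<forall>q\<in>S. val (snd p) (fst p) (fst x) (snd x) = val (snd q) (fst q) (fst x) (snd x)) \<and>
     (\<forall>V\<in>Dom. \<forall>p\<in>S. \<forall>q\<in>S. fst p V = fst q V)"
    show "\<forall>p\<in>S. \<forall>q\<in>S. fst p = fst q \<and> sim Ran (snd p) (snd q)"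
    proof (intro ballI)
      fix p q assume p: "p \<in> S" and q: "q \<in> S"
      have "\<forall>V\<in>Dom. fst p V = fst q V" using conjunct2[OF H] p q by blast
      then have fq: "fst p = fst q"
        using asg_fst[OF S p] asg_fst[OF S q] unfolding assignments_def by (intro PiE_ext) auto
      have "\<forall>V\<in>Dom. \<forall>w\<in>PiE (Dom - {V}) Ran. nv Ran (snd p) (fst p) V w = nv Ran (snd q) (fst p) V w"
      proof (intro ballI)
        fix V w assume V: "V \<in> Dom" and w: "w \<in> PiE (Dom - {V}) Ran"
        have X: "(V, w) \<in> ?X" using V w by simp
        have h: "\<forall>p\<in>S. \<forall>q\<in>S. val (snd p) (fst p) (fst (V, w)) (snd (V, w)) = val (snd q) (fst q) (fst (V, w)) (snd (V, w))"
          by (rule bspec[OF conjunct1[OF H] X])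
        have "val (snd p) (fst p) V w = val (snd q) (fst q) V w" using bspec[OF bspec[OF h p] q] by simp
        then show "nv Ran (snd p) (fst p) V w = nv Ran (snd q) (fst p) V w"
          using val_nv[OF wfp[OF p] cp[OF p] V w] val_nv[OF wfp[OF q] cp[OF q] V w] fq by simp
      qed
      then show "fst p = fst q \<and> sim Ran (snd p) (snd q)" using nv_sim[OF wfp[OF p] wfp[OF q]] fq by blast
    qed
  next
    assume H: "\<forall>p\<in>S. \<forall>q\<in>S. fst p = fst q \<and> sim Ran (snd p) (snd q)"
    have 1: "\<forall>x\<in>?X. \<forall>p\<in>S. \<forall>q\<in>S. val (snd p) (fst p) (fst x) (snd x) = val (snd q) (fst q) (fst x) (snd x)"
    proof (intro ballI)
      fix x p q assume x: "x \<in> ?X" and p: "p \<in> S" and q: "q \<in> S"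
      have V: "fst x \<in> Dom" and w: "snd x \<in> PiE (Dom - {fst x}) Ran" using x by (cases x, simp)+
      have fq: "fst p = fst q" and sm: "sim Ran (snd p) (snd q)" using bspec[OF bspec[OF H p] q] by blast+
      have "nv Ran (snd p) (fst p) (fst x) (snd x) = nv Ran (snd q) (fst p) (fst x) (snd x)"
        using nv_sim[OF wfp[OF p] wfp[OF q], of "fst p"] sm V w by blast
      then show "val (snd p) (fst p) (fst x) (snd x) = val (snd q) (fst q) (fst x) (snd x)"
        using val_nv[OF wfp[OF p] cp[OF p] V w] val_nv[OF wfp[OF q] cp[OF q] V w] fq by simp
    qed
    have 2: "\<forall>V\<in>Dom. \<forall>p\<in>S. \<forall>q\<in>S. fst p V = fst q V"
    proof (intro ballI)
      fix V p q assume "p \<in> S" "q \<in> S"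
      then have "fst p = fst q" using H by blast
      then show "fst p V = fst q V" by simp
    qed
    show "(\<forall>x\<in>?X. \<forall>p\<in>S. \<forall>q\<in>S. val (snd p) (fst p) (fst x) (snd x) = val (snd q) (fst q) (fst x) (snd x)) \<and>
     (\<forall>V\<in>Dom. \<forall>p\<in>S. \<forall>q\<in>S. fst p V = fst q V)" using 1 2 by blast
  qed
  also have "\<dots> \<longleftrightarrow> (\<forall>p\<in>S. \<forall>q\<in>S. key p = key q)"
    using key_eq wfp by blast
  finally show ?thesis .
qed


end


context sig begin

lemma key_fst: "fst (key p) = fst p"
  by (simp add: key_def)

lemma sat_chik:
  assumes S: "gen_team Dom Ran S"
  shows "sat_g S (chik Dom Ran k) \<longleftrightarrow> card (key ` S) \<le> k"
proof (cases "k = 0")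
  case True
  have "finite (key ` S)" using gen_team_finite[OF S] by simp
  then show ?thesis using True by (simp add: chik_def sat_Bot)
next
  case False
  have finK: "finite (key ` S)" using gen_team_finite[OF S] by simp
  have ne: "replicate k (chi Dom Ran) \<noteq> []" using False by simp
  have fib: "sat_g {p\<in>S. g p = i} (chi Dom Ran) \<longleftrightarrow>
      (\<forall>p\<in>{p\<in>S. g p = i}. \<forall>q\<in>{p\<in>S. g p = i}. key p = key q)" for g :: "_ \<Rightarrow> nat" and i
  proof -
    have "gen_team Dom Ran {p\<in>S. g p = i}" using gen_team_subset[OF S] by auto
    then show ?thesis by (rule sat_chi)
  qed
  have r: "\<And>i. i < k \<Longrightarrow> replicate k (chi Dom Ran) ! i = chi Dom Ran" by simp
  have step1: "sat_g S (chik Dom Ran k) \<longleftrightarrow>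
      (\<exists>g. (\<forall>p\<in>S. g p < k) \<and> (\<forall>i<k. sat_g {p\<in>S. g p = i} (chi Dom Ran)))"
  proof -
    have "sat_g S (chik Dom Ran k) \<longleftrightarrow>
      (\<exists>g. (\<forall>p\<in>S. g p < k) \<and> (\<forall>i<k. sat_g {p\<in>S. g p = i} (replicate k (chi Dom Ran) ! i)))"
      unfolding chik_def sat_ors[OF ne] length_replicate ..
    also have "\<dots> \<longleftrightarrow> (\<exists>g. (\<forall>p\<in>S. g p < k) \<and> (\<forall>i<k. sat_g {p\<in>S. g p = i} (chi Dom Ran)))"
    proof (intro ex_cong1 conj_cong refl all_cong1 imp_cong)
      fix g :: "_ \<Rightarrow> nat" and i assume "i < k"
      then show "sat_g {p\<in>S. g p = i} (replicate k (chi Dom Ran) ! i) = sat_g {p\<in>S. g p = i} (chi Dom Ran)"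
        using r by (simp only:)
    qed
    finally show ?thesis .
  qed
  have step2: "(\<forall>i<k. sat_g {p\<in>S. g p = i} (chi Dom Ran)) \<longleftrightarrow> (\<forall>p\<in>S. \<forall>q\<in>S. g p = g q \<longrightarrow> key p = key q)"
    if gk: "\<forall>p\<in>S. g p < k" for g :: "_ \<Rightarrow> nat"
  proof
    assume H: "\<forall>i<k. sat_g {p\<in>S. g p = i} (chi Dom Ran)"
    show "\<forall>p\<in>S. \<forall>q\<in>S. g p = g q \<longrightarrow> key p = key q"
    proof (intro ballI impI)
      fix p q assume p: "p \<in> S" and q: "q \<in> S" and e: "g p = g q"
      have "g p < k" using gk p by blast
      then have "sat_g {p'\<in>S. g p' = g p} (chi Dom Ran)" using H by blast
      then have H2: "\<forall>p'\<in>{p'\<in>S. g p' = g p}. \<forall>q'\<in>{p'\<in>S. g p' = g p}. key p' = key q'" unfolding fib .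
      have "p \<in> {p'\<in>S. g p' = g p}" "q \<in> {p'\<in>S. g p' = g p}" using p q e by simp_all
      then show "key p = key q" using H2 by blast
    qed
  next
    assume H: "\<forall>p\<in>S. \<forall>q\<in>S. g p = g q \<longrightarrow> key p = key q"
    show "\<forall>i<k. sat_g {p\<in>S. g p = i} (chi Dom Ran)"
    proof (intro allI impI)
      fix i
      have "\<forall>p'\<in>{p\<in>S. g p = i}. \<forall>q'\<in>{p\<in>S. g p = i}. key p' = key q'"
      proof (intro ballI)
        fix p' q' assume "p' \<in> {p\<in>S. g p = i}" "q' \<in> {p\<in>S. g p = i}"
        then have "p' \<in> S" "q' \<in> S" "g p' = g q'" by simp_all
        then show "key p' = key q'" using H by blast
      qed
      then show "sat_g {p\<in>S. g p = i} (chi Dom Ran)" unfolding fib .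
    qed
  qed
  have step3: "(\<exists>g. (\<forall>p\<in>S. g p < k) \<and> (\<forall>p\<in>S. \<forall>q\<in>S. g p = g q \<longrightarrow> key p = key q))
      \<longleftrightarrow> card (key ` S) \<le> k"
  proof
    assume "\<exists>g. (\<forall>p\<in>S. g p < k) \<and> (\<forall>p\<in>S. \<forall>q\<in>S. g p = g q \<longrightarrow> key p = key q)"
    then obtain g :: "_ \<Rightarrow> nat" where g1: "\<forall>p\<in>S. g p < k" and g2: "\<forall>p\<in>S. \<forall>q\<in>S. g p = g q \<longrightarrow> key p = key q"
      by blast
    define c where "c \<kappa> = (SOME p. p \<in> S \<and> key p = \<kappa>)" for \<kappa>
    have c: "c \<kappa> \<in> S \<and> key (c \<kappa>) = \<kappa>" if "\<kappa> \<in> key ` S" for \<kappa>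
    proof -
      have "\<exists>p. p \<in> S \<and> key p = \<kappa>" using that by blast
      then show ?thesis unfolding c_def by (rule someI_ex)
    qed
    have "inj_on (\<lambda>\<kappa>. g (c \<kappa>)) (key ` S)"
    proof (rule inj_onI)
      fix \<kappa>1 \<kappa>2 assume k1: "\<kappa>1 \<in> key ` S" and k2: "\<kappa>2 \<in> key ` S" and eq: "g (c \<kappa>1) = g (c \<kappa>2)"
      have c1: "c \<kappa>1 \<in> S" "key (c \<kappa>1) = \<kappa>1" using c[OF k1] by blast+
      have c2: "c \<kappa>2 \<in> S" "key (c \<kappa>2) = \<kappa>2" using c[OF k2] by blast+
      have "key (c \<kappa>1) = key (c \<kappa>2)" using g2 c1(1) c2(1) eq by blast
      then show "\<kappa>1 = \<kappa>2" using c1(2) c2(2) by simp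
    qed
    moreover have "(\<lambda>\<kappa>. g (c \<kappa>)) ` key ` S \<subseteq> {..<k}"
    proof
      fix x assume "x \<in> (\<lambda>\<kappa>. g (c \<kappa>)) ` key ` S"
      then obtain \<kappa> where k: "\<kappa> \<in> key ` S" "x = g (c \<kappa>)" by blast
      have "c \<kappa> \<in> S" using c[OF k(1)] by blast
      then show "x \<in> {..<k}" using g1 k(2) by simp
    qed
    ultimately have "card (key ` S) \<le> card {..<k}" by (rule card_inj_on_le) simp
    then show "card (key ` S) \<le> k" by simp
  next
    assume le: "card (key ` S) \<le> k"
    obtain h where h: "bij_betw h (key ` S) {0..<card (key ` S)}" using ex_bij_betw_finite_nat[OF finK] by blast
    have 1: "\<forall>p\<in>S. h (key p) < k"
    proof
      fix p assume "p \<in> S"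
      then have "h (key p) \<in> {0..<card (key ` S)}" using h unfolding bij_betw_def by blast
      then show "h (key p) < k" using le by simp
    qed
    have 2: "\<forall>p\<in>S. \<forall>q\<in>S. h (key p) = h (key q) \<longrightarrow> key p = key q"
    proof (intro ballI impI)
      fix p q assume "p \<in> S" "q \<in> S" "h (key p) = h (key q)"
      then show "key p = key q" using h unfolding bij_betw_def inj_on_def by blast
    qed
    show "\<exists>g. (\<forall>p\<in>S. g p < k) \<and> (\<forall>p\<in>S. \<forall>q\<in>S. g p = g q \<longrightarrow> key p = key q)"
      using 1 2 by (intro exI[of _ "\<lambda>p. h (key p)"]) blast
  qed
  show ?thesis unfolding step1 step3[symmetric] using step2 by blast
qed

lemma gen_restr_mem: "p \<in> gen_restr Ran X F \<longleftrightarrow> p \<in> X \<and> sim Ran (snd p) F"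
  by (cases p) (simp add: gen_restr_def)

lemma restr_sub:
  assumes X: "gen_team Dom Ran X" and Y: "gen_team Dom Ran Y" and k: "key ` X \<subseteq> key ` Y"
    and F: "wf_sys Dom Ran F"
  shows "fst ` gen_restr Ran X F \<subseteq> fst ` gen_restr Ran Y F"
proof
  fix s assume "s \<in> fst ` gen_restr Ran X F"
  then obtain p where p: "p \<in> X" "sim Ran (snd p) F" "fst p = s" by (auto simp: gen_restr_mem)
  obtain q where q: "q \<in> Y" "key q = key p" using k p(1) by (metis image_iff subsetD)
  have "fst q = fst p" "sim Ran (snd q) (snd p)"
    using key_eq[OF gen_team_wf[OF Y q(1)] gen_team_wf[OF X p(1)]] q(2) by auto
  then have "fst q = s" "sim Ran (snd q) F"
    using p sim_trans[OF gen_team_wf[OF Y q(1)] gen_team_wf[OF X p(1)] F] by auto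
  then show "s \<in> fst ` gen_restr Ran Y F" using q(1) by (force simp: gen_restr_mem)
qed

lemma approx_key_sub:
  assumes X: "gen_team Dom Ran X" and Y: "gen_team Dom Ran Y" and a: "approx_g Dom Ran X Y"
  shows "key ` X \<subseteq> key ` Y"
proof
  fix k assume "k \<in> key ` X"
  then obtain p where p: "p \<in> X" "k = key p" by blast
  have wp: "wf_sys Dom Ran (snd p)" using gen_team_wf[OF X p(1)] .
  have "fst p \<in> fst ` gen_restr Ran X (snd p)" using p(1) sim_refl[OF wp] by (force simp: gen_restr_mem)
  then have "fst p \<in> fst ` gen_restr Ran Y (snd p)" using a wp unfolding approx_g_def by blast
  then obtain q where q: "q \<in> Y" "sim Ran (snd q) (snd p)" "fst q = fst p" by (auto simp: gen_restr_mem)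
  have "key q = key p" using key_eq[OF gen_team_wf[OF Y q(1)] wp] q by simp
  then show "k \<in> key ` Y" using q(1) p(2) by (metis image_eqI)
qed

lemma approx_keys:
  assumes X: "gen_team Dom Ran X" and Y: "gen_team Dom Ran Y"
  shows "approx_g Dom Ran X Y \<longleftrightarrow> key ` X = key ` Y"
proof
  assume a: "approx_g Dom Ran X Y"
  then have a': "approx_g Dom Ran Y X" unfolding approx_g_def by metis
  show "key ` X = key ` Y" using approx_key_sub[OF X Y a] approx_key_sub[OF Y X a'] by blast
next
  assume "key ` X = key ` Y"
  then show "approx_g Dom Ran X Y"
    unfolding approx_g_def using restr_sub[OF X Y] restr_sub[OF Y X] by (metis equalityI order_refl)
qed

lemma prec_single:
  assumes T: "gen_team Dom Ran T" and F: "wf_sys Dom Ran F"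
  shows "prec_g Dom Ran {(s, F)} T \<longleftrightarrow> (\<exists>q\<in>T. fst q = s \<and> sim Ran (snd q) F)"
proof
  assume "prec_g Dom Ran {(s, F)} T"
  then obtain R where R: "R \<subseteq> T" "approx_g Dom Ran {(s, F)} R" unfolding prec_g_def by blast
  have "s \<in> fst ` gen_restr Ran {(s, F)} F" using sim_refl[OF F] by (force simp: gen_restr_mem)
  then have "s \<in> fst ` gen_restr Ran R F" using R(2) F unfolding approx_g_def by blast
  then obtain q where "q \<in> R" "sim Ran (snd q) F" "fst q = s" by (auto simp: gen_restr_mem)
  then show "\<exists>q\<in>T. fst q = s \<and> sim Ran (snd q) F" using R(1) by blast
next
  assume "\<exists>q\<in>T. fst q = s \<and> sim Ran (snd q) F"
  then obtain q where q: "q \<in> T" "fst q = s" "sim Ran (snd q) F" by blast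
  have wq: "wf_sys Dom Ran (snd q)" using gen_team_wf[OF T q(1)] .
  have "approx_g Dom Ran {(s, F)} {q}"
    unfolding approx_g_def
  proof (intro allI impI)
    fix F' assume F': "wf_sys Dom Ran F'"
    have iff: "sim Ran F F' \<longleftrightarrow> sim Ran (snd q) F'"
      using sim_trans[OF wq F F'] sim_trans[OF F wq F'] sim_sym[OF wq F] q(3) by blast
    have e1: "gen_restr Ran {(s, F)} F' = (if sim Ran F F' then {(s, F)} else {})"
      by (auto simp: gen_restr_mem)
    have e2: "gen_restr Ran {q} F' = (if sim Ran (snd q) F' then {q} else {})"
      by (auto simp: gen_restr_mem)
    show "fst ` gen_restr Ran {(s, F)} F' = fst ` gen_restr Ran {q} F'"
      unfolding e1 e2 iff using q(2) by simp
  qed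
  then show "prec_g Dom Ran {(s, F)} T" unfolding prec_g_def using q(1) by blast
qed

lemma key_eqI:
  assumes "wf_sys Dom Ran (snd p)" "wf_sys Dom Ran (snd q)" "key p = key q"
  shows "fst p = fst q" "sim Ran (snd p) (snd q)"
  using key_eq[OF assms(1,2)] assms(3) by blast+

lemma sat_Phi3:
  assumes S: "gen_team Dom Ran S" and T: "gen_team Dom Ran T"
  shows "sat_g S (BigOr Dom Ran {And (Theta Dom Ran {s}) (Phi Dom Ran F) | s F.
               s \<in> fst ` T \<and> wf_sys Dom Ran F \<and> \<not> prec_g Dom Ran {(s, F)} T})
     \<longleftrightarrow> (\<forall>p\<in>S. fst p \<in> fst ` T \<and> key p \<notin> key ` T)"
proof -
  let ?A = "{And (Theta Dom Ran {s}) (Phi Dom Ran F) | s F.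
               s \<in> fst ` T \<and> wf_sys Dom Ran F \<and> \<not> prec_g Dom Ran {(s, F)} T}"
  let ?h = "\<lambda>x. And (Theta Dom Ran {fst x}) (Phi Dom Ran (snd x))"
  have sub: "?A \<subseteq> ?h ` (fst ` T \<times> {F. wf_sys Dom Ran F})"
  proof
    fix \<phi> assume "\<phi> \<in> ?A"
    then obtain s F where sF: "\<phi> = And (Theta Dom Ran {s}) (Phi Dom Ran F)" "s \<in> fst ` T" "wf_sys Dom Ran F"
      by blast
    show "\<phi> \<in> ?h ` (fst ` T \<times> {F. wf_sys Dom Ran F})"
      by (rule image_eqI[where x="(s, F)"]) (simp_all add: sF)
  qed
  have finA: "finite ?A"
    using gen_team_finite[OF T] finite_wf by (intro finite_subset[OF sub] finite_imageI finite_SigmaI) auto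
  have one: "sat_g U (And (Theta Dom Ran {s}) (Phi Dom Ran F)) \<longleftrightarrow> (\<forall>p\<in>U. fst p = s \<and> sim Ran (snd p) F)"
    if U: "gen_team Dom Ran U" and s: "s \<in> fst ` T" and F: "wf_sys Dom Ran F" for U s F
  proof -
    have "{s} \<subseteq> assignments Dom Ran" using s asg_fst[OF T] by blast
    then have "sat_g U (Theta Dom Ran {s}) \<longleftrightarrow> (\<forall>p\<in>U. fst p = s)" using sat_Theta[OF U] by simp
    then show ?thesis using sat_Phi[OF U F] by auto
  qed
  have fl: "sat_g U \<phi> \<longleftrightarrow> (\<forall>p\<in>U. sat_g {p} \<phi>)" if ph: "\<phi> \<in> ?A" and US: "U \<subseteq> S" for \<phi> U
  proof -
    obtain s F where sF: "\<phi> = And (Theta Dom Ran {s}) (Phi Dom Ran F)" "s \<in> fst ` T" "wf_sys Dom Ran F"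
      using ph by blast
    have U: "gen_team Dom Ran U" using gen_team_subset[OF S US] .
    have "sat_g {p} \<phi> \<longleftrightarrow> fst p = s \<and> sim Ran (snd p) F" if "p \<in> U" for p
      using one[OF gen_team_subset[OF U, of "{p}"] sF(2,3)] that sF(1) by simp
    then show ?thesis using one[OF U sF(2,3)] sF(1) by auto
  qed
  have "sat_g S (BigOr Dom Ran ?A) \<longleftrightarrow> (\<forall>p\<in>S. \<exists>\<phi>\<in>?A. sat_g {p} \<phi>)"
    using finA by (intro sat_BigOr_flat fl) auto
  also have "\<dots> \<longleftrightarrow> (\<forall>p\<in>S. fst p \<in> fst ` T \<and> key p \<notin> key ` T)"
  proof (rule ball_cong[OF refl])
    fix p assume p: "p \<in> S"
    have g: "gen_team Dom Ran {p}" using gen_team_subset[OF S] p by auto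
    have wp: "wf_sys Dom Ran (snd p)" using gen_team_wf[OF S p] .
    show "(\<exists>\<phi>\<in>?A. sat_g {p} \<phi>) \<longleftrightarrow> fst p \<in> fst ` T \<and> key p \<notin> key ` T"
    proof
      assume "\<exists>\<phi>\<in>?A. sat_g {p} \<phi>"
      then obtain s F where sF: "s \<in> fst ` T" "wf_sys Dom Ran F" "\<not> prec_g Dom Ran {(s, F)} T"
        "sat_g {p} (And (Theta Dom Ran {s}) (Phi Dom Ran F))" by blast
      then have ps: "fst p = s" and psim: "sim Ran (snd p) F" using one[OF g sF(1,2)] by auto
      have "key p \<notin> key ` T"
      proof
        assume "key p \<in> key ` T"
        then obtain q where q: "q \<in> T" "key q = key p" by (metis imageE)
        have wq: "wf_sys Dom Ran (snd q)" using gen_team_wf[OF T q(1)] .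
        have "fst q = fst p" "sim Ran (snd q) (snd p)" using key_eqI[OF wq wp q(2)] by blast+
        moreover have "sim Ran (snd q) F" using sim_trans[OF wq wp sF(2)] calculation(2) psim by blast
        ultimately have "prec_g Dom Ran {(s, F)} T" using prec_single[OF T sF(2)] q(1) ps by blast
        then show False using sF(3) by blast
      qed
      then show "fst p \<in> fst ` T \<and> key p \<notin> key ` T" using sF(1) ps by blast
    next
      assume H: "fst p \<in> fst ` T \<and> key p \<notin> key ` T"
      have np: "\<not> prec_g Dom Ran {(fst p, snd p)} T"
      proof
        assume "prec_g Dom Ran {(fst p, snd p)} T"
        then obtain q where q: "q \<in> T" "fst q = fst p" "sim Ran (snd q) (snd p)"
          using prec_single[OF T wp] by blast
        have "key q = key p" using key_eq[OF gen_team_wf[OF T q(1)] wp] q(2,3) by blast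
        then show False using H q(1) by (metis image_eqI)
      qed
      have "And (Theta Dom Ran {fst p}) (Phi Dom Ran (snd p)) \<in> ?A" using H wp np by blast
      moreover have "sat_g {p} (And (Theta Dom Ran {fst p}) (Phi Dom Ran (snd p)))"
        using one[OF g _ wp, of "fst p"] H sim_refl[OF wp] by simp
      ultimately show "\<exists>\<phi>\<in>?A. sat_g {p} \<phi>" by blast
    qed
  qed
  finally show ?thesis .
qed

theorem main_g:
  assumes S: "gen_team Dom Ran S" and T: "gen_team Dom Ran T" and Tne: "T \<noteq> {}"
  shows "sat_g S (Xi_g Dom Ran T) \<longleftrightarrow> \<not> prec_g Dom Ran T S"
proof -
  let ?K = "card (key ` T)"
  let ?A = "chik Dom Ran (num_classes Ran T - 1)"
  let ?B = "Theta Dom Ran (assignments Dom Ran - fst ` T)"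
  let ?C = "BigOr Dom Ran {And (Theta Dom Ran {s}) (Phi Dom Ran F) | s F.
               s \<in> fst ` T \<and> wf_sys Dom Ran F \<and> \<not> prec_g Dom Ran {(s, F)} T}"
  have Xi: "Xi_g Dom Ran T = Or ?A (Or ?B ?C)" by (simp add: Xi_g_def)
  have finKT: "finite (key ` T)" using gen_team_finite[OF T] by simp
  have K1: "?K \<ge> 1" using finKT Tne by (simp add: Suc_le_eq card_gt_0_iff)
  have nc: "num_classes Ran T = ?K" using num_classes_key[OF T] .
  have satA: "sat_g U ?A \<longleftrightarrow> card (key ` U) \<le> ?K - 1" if "U \<subseteq> S" for U
    using sat_chik[OF gen_team_subset[OF S that]] nc by simp
  have satB: "sat_g U ?B \<longleftrightarrow> (\<forall>p\<in>U. fst p \<notin> fst ` T)" if "U \<subseteq> S" for U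
  proof -
    have U: "gen_team Dom Ran U" using gen_team_subset[OF S that] .
    have "sat_g U ?B \<longleftrightarrow> (\<forall>p\<in>U. fst p \<in> assignments Dom Ran - fst ` T)" by (rule sat_Theta[OF U]) blast
    then show ?thesis using asg_fst[OF U] by blast
  qed
  have satC: "sat_g U ?C \<longleftrightarrow> (\<forall>p\<in>U. fst p \<in> fst ` T \<and> key p \<notin> key ` T)" if "U \<subseteq> S" for U
    using sat_Phi3[OF gen_team_subset[OF S that] T] .
  show ?thesis
  proof
    assume sat: "sat_g S (Xi_g Dom Ran T)"
    show "\<not> prec_g Dom Ran T S"
    proof
      assume "prec_g Dom Ran T S"
      then obtain R where R: "R \<subseteq> S" "approx_g Dom Ran T R" unfolding prec_g_def by blast
      have gR: "gen_team Dom Ran R" using gen_team_subset[OF S R(1)] .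
      have kR: "key ` T = key ` R" using approx_keys[OF T gR] R(2) by blast
      have "sat_g R (Or ?A (Or ?B ?C))" using sat_g_mono[OF sat R(1)] Xi by simp
      then obtain R1 R23 where r1: "R = R1 \<union> R23" "sat_g R1 ?A" "sat_g R23 (Or ?B ?C)"
        by (simp only: sat_g.simps) blast
      then obtain R2 R3 where r2: "R23 = R2 \<union> R3" "sat_g R2 ?B" "sat_g R3 ?C"
        by (simp only: sat_g.simps) blast
      have s1: "R1 \<subseteq> S" "R2 \<subseteq> S" "R3 \<subseteq> S" using r1(1) r2(1) R(1) by auto
      have c1: "card (key ` R1) \<le> ?K - 1" using satA[OF s1(1)] r1(2) by blast
      have c2: "\<forall>p\<in>R2. fst p \<notin> fst ` T" using satB[OF s1(2)] r2(2) by blast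
      have c3: "\<forall>p\<in>R3. key p \<notin> key ` T" using satC[OF s1(3)] r2(3) by blast
      have "key ` T \<subseteq> key ` R1"
      proof
        fix k assume "k \<in> key ` T"
        then obtain p where p: "p \<in> R" "k = key p" using kR by (metis imageE)
        have kT: "key p \<in> key ` T" using p kR by blast
        have "p \<notin> R2"
        proof
          assume "p \<in> R2"
          obtain q where "q \<in> T" "key q = key p" using kT by (metis imageE)
          then have "fst p \<in> fst ` T" using key_fst[of q] key_fst[of p] by (metis image_eqI)
          then show False using c2 \<open>p \<in> R2\<close> by blast
        qed
        moreover have "p \<notin> R3" using c3 kT by blast
        ultimately have "p \<in> R1" using p(1) r1(1) r2(1) by blast
        then show "k \<in> key ` R1" using p(2) by blast
      qed
      then have "?K \<le> card (key ` R1)"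
        using gen_team_finite[OF gR] r1(1) by (intro card_mono) auto
      then show False using c1 K1 by linarith
    qed
  next
    assume np: "\<not> prec_g Dom Ran T S"
    define S1 where "S1 = {p\<in>S. key p \<in> key ` T}"
    define S2 where "S2 = {p\<in>S. fst p \<notin> fst ` T}"
    define S3 where "S3 = {p\<in>S. fst p \<in> fst ` T \<and> key p \<notin> key ` T}"
    have sub: "S1 \<subseteq> S" "S2 \<subseteq> S" "S3 \<subseteq> S" unfolding S1_def S2_def S3_def by auto
    have un: "S = S1 \<union> (S2 \<union> S3)" unfolding S1_def S2_def S3_def by blast
    have "sat_g S2 ?B" using satB[OF sub(2)] unfolding S2_def by blast
    moreover have "sat_g S3 ?C" using satC[OF sub(3)] unfolding S3_def by blast
    moreover have "sat_g S1 ?A"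
    proof -
      have gS1: "gen_team Dom Ran S1" using gen_team_subset[OF S sub(1)] .
      have ksub: "key ` S1 \<subseteq> key ` T" unfolding S1_def by blast
      have "card (key ` S1) \<le> ?K - 1"
      proof (rule ccontr)
        assume "\<not> card (key ` S1) \<le> ?K - 1"
        then have "card (key ` S1) \<ge> ?K" by linarith
        moreover have "card (key ` S1) \<le> ?K" using card_mono[OF finKT ksub] .
        ultimately have "card (key ` S1) = ?K" by linarith
        then have "key ` S1 = key ` T" using card_subset_eq[OF finKT ksub] by blast
        then have "approx_g Dom Ran T S1" using approx_keys[OF T gS1] by simp
        then have "prec_g Dom Ran T S" unfolding prec_g_def using sub(1) by blast
        then show False using np by blast
      qed
      then show ?thesis using satA[OF sub(1)] by blast
    qed
    ultimately have "sat_g S (Or ?A (Or ?B ?C))" using un by (simp only: sat_g.simps) blast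
    then show "sat_g S (Xi_g Dom Ran T)" using Xi by simp
  qed
qed

lemma causal_gen:
  assumes "causal_team Dom Ran T G"
  shows "gen_team Dom Ran (to_gen T G)"
  using assms unfolding causal_team_def gen_team_def to_gen_img by auto

lemma prec_c_g:
  assumes S: "causal_team Dom Ran S F" and T: "causal_team Dom Ran T G" and Tne: "T \<noteq> {}"
  shows "prec_c Ran T G S F \<longleftrightarrow> prec_g Dom Ran (to_gen T G) (to_gen S F)"
proof -
  have wF: "wf_sys Dom Ran F" and wG: "wf_sys Dom Ran G" using S T unfolding causal_team_def by auto
  have gS: "gen_team Dom Ran (to_gen S F)" and gT: "gen_team Dom Ran (to_gen T G)"
    using causal_gen[OF S] causal_gen[OF T] .
  have pc: "prec_c Ran T G S F \<longleftrightarrow> T \<subseteq> S \<and> sim Ran G F"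
    unfolding prec_c_def approx_c_def using Tne by blast
  show ?thesis
  proof
    assume "prec_c Ran T G S F"
    then have TS: "T \<subseteq> S" and sGF: "sim Ran G F" using pc by blast+
    have R: "to_gen T F \<subseteq> to_gen S F" using TS unfolding to_gen_img by blast
    have gR: "gen_team Dom Ran (to_gen T F)" using gen_team_subset[OF gS R] .
    have "key (s, G) = key (s, F)" for s using key_eq[of "(s, G)" "(s, F)"] wF wG sGF by simp
    then have "key ` to_gen T G = key ` to_gen T F" unfolding to_gen_img image_image by simp
    then have "approx_g Dom Ran (to_gen T G) (to_gen T F)" using approx_keys[OF gT gR] by simp
    then show "prec_g Dom Ran (to_gen T G) (to_gen S F)" unfolding prec_g_def using R by blast
  next
    assume "prec_g Dom Ran (to_gen T G) (to_gen S F)"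
    then obtain R where R: "R \<subseteq> to_gen S F" "approx_g Dom Ran (to_gen T G) R" unfolding prec_g_def by blast
    have gR: "gen_team Dom Ran R" using gen_team_subset[OF gS R(1)] .
    have kR: "key ` to_gen T G = key ` R" using approx_keys[OF gT gR] R(2) by blast
    have mem: "\<exists>p\<in>R. fst p = s \<and> snd p = F \<and> sim Ran G F" if s: "s \<in> T" for s
    proof -
      have "key (s, G) \<in> key ` R" using kR s unfolding to_gen_img by blast
      then obtain p where p: "p \<in> R" "key (s, G) = key p" by (metis imageE)
      have sp: "snd p = F" using p(1) R(1) unfolding to_gen_img by auto
      have "fst (s, G) = fst p" "sim Ran (snd (s, G)) (snd p)"
        using key_eqI[of "(s, G)" p] wG sp wF p(2) by auto
      then show ?thesis using p(1) sp by auto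
    qed
    have "T \<subseteq> S"
    proof
      fix s assume "s \<in> T"
      then obtain p where "p \<in> R" "fst p = s" using mem by blast
      then show "s \<in> S" using R(1) unfolding to_gen_img by auto
    qed
    moreover have "sim Ran G F" using mem Tne by blast
    ultimately show "prec_c Ran T G S F" using pc by blast
  qed
qed

end

theorem lemma5p5:
  fixes Dom :: "'v set" and Ran :: "'v \<Rightarrow> 'a set"
  assumes "signature Dom Ran"
  shows "(\<forall>S F T G. causal_team Dom Ran S F \<longrightarrow> causal_team Dom Ran T G \<longrightarrow> T \<noteq> {} \<longrightarrow>
            (sat_c S F (Xi_c Dom Ran T G) \<longleftrightarrow> \<not> prec_c Ran T G S F))
       \<and> (\<forall>S T. gen_team Dom Ran S \<longrightarrow> gen_team Dom Ran T \<longrightarrow> T \<noteq> {} \<longrightarrow>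
            (sat_g S (Xi_g Dom Ran T) \<longleftrightarrow> \<not> prec_g Dom Ran T S))"
proof -
  interpret sig Dom Ran by unfold_locales (rule assms)
  have part1: "sat_c S F (Xi_c Dom Ran T G) \<longleftrightarrow> \<not> prec_c Ran T G S F"
    if S: "causal_team Dom Ran S F" and T: "causal_team Dom Ran T G" and Tne: "T \<noteq> {}" for S F T G
  proof -
    have ne: "to_gen T G \<noteq> {}" using Tne unfolding to_gen_img by blast
    have "sat_c S F (Xi_c Dom Ran T G) \<longleftrightarrow> sat_g (to_gen S F) (Xi_g Dom Ran (to_gen T G))"
      unfolding Xi_c_def by (rule sat_c_g)
    also have "\<dots> \<longleftrightarrow> \<not> prec_g Dom Ran (to_gen T G) (to_gen S F)"
      by (rule main_g[OF causal_gen[OF S] causal_gen[OF T] ne])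
    also have "\<dots> \<longleftrightarrow> \<not> prec_c Ran T G S F" using prec_c_g[OF S T Tne] by simp
    finally show ?thesis .
  qed
  show ?thesis using part1 main_g by blast
qed


end
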